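(* Let $\mathcal{I}(X,\mathcal{R})$ be an index coding problem with messages $X=\{x_1,\dots,x_m\}$, each in $\mathbb{F}_q^n$, and receivers $R_i=(x_{f(i)},H_i)\in\mathcal{R}$, each with a prescribed error-correcting capability $\delta_i\in\mathbb{Z}_{\ge0}$ satisfying $2\delta_i\le c$. Then there exists a vector linear differential error correcting index code over $\mathbb{F}_q$ of length $c$ and dimension $n$ for this problem (with capabilities $\delta_i$) if and only if there exists a discrete polymatroid $\mathbb{D}$ on the ground set $\{1,\dots,m+2c\}$, representable over $\mathbb{F}_q$, with rank function $r$ and $r(\{1,\dots,m+2c\})=mn+c$, satisfying: (A) $r(\{j\})=n$ for all $j\in\{1,\dots,m\}$; $r(\{1,\dots,m+c\})=mn+c$; and $r(\{m+j\})=1$ for all $j\in\{1,\dots,2c\}$; (B) for every $j\in\{1,\dots,c\}$: $r(\{1,\dots,m\}\cup\{m+j,m+c+j\})=r(\{1,\dots,m\}\cup\{m+j\})=r(\{1,\dots,m\}\cup\{m+c+j\})$; (C) for every receiver $R_i=(x_{f(i)},H_i)$ and every set $\mathcal{F}=\{i_1,\dots,i_{2\delta_i}\}\subseteq\{1,\dots,c\}$ with $|\mathcal{F}|=2\delta_i$, setting $$T_{\mathcal{F},i}=\{1,\dots,m+c\}\setminus\big(\overline{H_i}\cup\{m+i_1,\dots,m+i_{2\delta_i}\}\big),\qquad \mathbb{D}_{\mathcal{F},i}=\mathbb{D}/T_{\mathcal{F},i},$$ one has $r_{\mathbb{D}_{\mathcal{F},i}}(\{f(i)\}\cup S)=r_{\mathbb{D}_{\mathcal{F},i}}(S)$,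 where $S=\{m+c+1,\dots,m+2c\}$ and $\overline{H_i}=\{1,\dots,m\}\setminus\{j: x_j\in H_i\}$.
   Context: Index coding problem: messages $x_1,\dots,x_m\in\mathbb{F}_q^n$ (row vectors), $y=[x_1\ \cdots\ x_m]\in\mathbb{F}_q^{mn}$; each receiver $R_i=(x_{f(i)},H_i)$ demands $x_{f(i)}$ and knows side information $H_i\subseteq X\setminus\{x_{f(i)}\}$. A differential error correcting index code of length $c$ and dimension $n$ is a map $\mathfrak{C}:\mathbb{F}_q^{mn}\to\mathbb{F}_q^c$ such that for each receiver $R_i$ there is a decoding function $\psi_{R_i}$ with $\psi_{R_i}(\mathfrak{C}(y)+\epsilon_i,H_i)=x_{f(i)}$ for all $y\in\mathbb{F}_q^{mn}$ and all $\epsilon_i\in\mathbb{F}_q^c$ of Hamming weight at most $\delta_i$. It is vector linear if $\mathfrak{C}(y)=yL$ for some $mn\times c$ matrix $L$ over $\mathbb{F}_q$. Discrete polymatroid: a nonempty finite $\mathbb{D}\subseteq\mathbb{Z}_{\ge0}^N$ closed under taking componentwise-smaller nonnegative integer vectors and such that for $u,v\in\mathbb{D}$ with $|u|<|v|$ there is $w\in\mathbb{D}$ with $u<w\le u\vee v$; its rank function is $r(A)=\max\{\sum_{j\in A}u_j:u\in\mathbb{D}\}$, $r(\emptyset)=0$, and it determines $\mathbb{D}$. $\mathbb{D}$ is representable over $\mathbb{F}_q$ if there are subspaces $V_1,\dots,V_N$ of an $\mathbb{F}_q$-vector space with $\dim(\sum_{j\in A}V_j)=r(A)$ for all $A$.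 For $T$ a subset of the ground set $E$, the contraction $\mathbb{D}/T$ has ground set $E\setminus T$ and rank function $r_{\mathbb{D}/T}(A)=r(A\cup T)-r(T)$. *)

theory Defs
  imports Complex_Main "HOL-Library.Function_Algebras"
begin

text \<open>Vectors of F_q^k are functions nat => 'a supported on {1..k} (coordinates 1..k).\<close>
definition fvec :: "nat \<Rightarrow> (nat \<Rightarrow> 'a::zero) set" where
  "fvec k = {v. \<forall>t. t \<notin> {1..k} \<longrightarrow> v t = 0}"

definition msgs :: "nat \<Rightarrow> nat \<Rightarrow> (nat \<Rightarrow> nat \<Rightarrow> 'a::zero) set" where
  "msgs m n = {x. (\<forall>j\<in>{1..m}. x j \<in> fvec n) \<and> (\<forall>j. j \<notin> {1..m} \<longrightarrow> x j = (\<lambda>_. 0))}"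

definition hweight :: "(nat \<Rightarrow> 'a::zero) \<Rightarrow> nat" where
  "hweight e = card {t. e t \<noteq> 0}"

definition side_info :: "nat set \<Rightarrow> (nat \<Rightarrow> nat \<Rightarrow> 'a::zero) \<Rightarrow> (nat \<Rightarrow> nat \<Rightarrow> 'a)" where
  "side_info H x = (\<lambda>j. if j \<in> H then x j else (\<lambda>_. 0))"

definition is_diff_ecic ::
  "nat \<Rightarrow> nat \<Rightarrow> nat \<Rightarrow> 'r set \<Rightarrow> ('r \<Rightarrow> nat) \<Rightarrow> ('r \<Rightarrow> nat set) \<Rightarrow> ('r \<Rightarrow> nat)
    \<Rightarrow> ((nat \<Rightarrow> nat \<Rightarrow> 'a::field) \<Rightarrow> (nat \<Rightarrow> 'a)) \<Rightarrow> bool" where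
  "is_diff_ecic m n c I f H \<delta> C \<longleftrightarrow>
     (\<forall>x\<in>msgs m n. C x \<in> fvec c) \<and>
     (\<forall>i\<in>I. \<exists>\<psi>. \<forall>x\<in>msgs m n. \<forall>e\<in>fvec c. hweight e \<le> \<delta> i \<longrightarrow>
         \<psi> (\<lambda>t. C x t + e t) (side_info (H i) x) = x (f i))"

text \<open>y L for y = [x_1 ... x_m] in F_q^{mn} (row r of L, r in 1..mn, corresponds to
  coordinate ((r-1) mod n)+1 of message ((r-1) div n)+1), columns 1..c.\<close>
definition lin_encode :: "nat \<Rightarrow> nat \<Rightarrow> nat \<Rightarrow> (nat \<Rightarrow> nat \<Rightarrow> 'a::field)
    \<Rightarrow> (nat \<Rightarrow> nat \<Rightarrow> 'a) \<Rightarrow> (nat \<Rightarrow> 'a)" where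
  "lin_encode m n c L x = (\<lambda>k. if k \<in> {1..c} then
      (\<Sum>r\<in>{1..m*n}. x ((r - 1) div n + 1) ((r - 1) mod n + 1) * L r k) else 0)"

definition is_vl_diff_ecic ::
  "nat \<Rightarrow> nat \<Rightarrow> nat \<Rightarrow> 'r set \<Rightarrow> ('r \<Rightarrow> nat) \<Rightarrow> ('r \<Rightarrow> nat set) \<Rightarrow> ('r \<Rightarrow> nat)
    \<Rightarrow> 'a::field itself \<Rightarrow> bool" where
  "is_vl_diff_ecic m n c I f H \<delta> _ \<longleftrightarrow>
     (\<exists>L :: nat \<Rightarrow> nat \<Rightarrow> 'a. is_diff_ecic m n c I f H \<delta> (lin_encode m n c L))"

text \<open>A discrete polymatroid on ground set {1..N}: vectors in Z_{>=0}^N are functions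
  nat => nat supported on {1..N}.\<close>
definition discrete_polymatroid :: "nat \<Rightarrow> (nat \<Rightarrow> nat) set \<Rightarrow> bool" where
  "discrete_polymatroid N D \<longleftrightarrow>
     D \<noteq> {} \<and> finite D \<and>
     (\<forall>u\<in>D. \<forall>j. j \<notin> {1..N} \<longrightarrow> u j = 0) \<and>
     (\<forall>u\<in>D. \<forall>v. (\<forall>j. v j \<le> u j) \<longrightarrow> v \<in> D) \<and>
     (\<forall>u\<in>D. \<forall>v\<in>D. (\<Sum>j\<in>{1..N}. u j) < (\<Sum>j\<in>{1..N}. v j) \<longrightarrow>
        (\<exists>w\<in>D. (\<forall>j. u j \<le> w j) \<and> u \<noteq> w \<and> (\<forall>j. w j \<le> max (u j) (v j))))"

definition pm_rank :: "(nat \<Rightarrow> nat) set \<Rightarrow> nat set \<Rightarrow> nat" where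
  "pm_rank D A = Max {(\<Sum>j\<in>A. u j) | u. u \<in> D}"

definition contr_rank :: "(nat set \<Rightarrow> nat) \<Rightarrow> nat set \<Rightarrow> nat set \<Rightarrow> nat" where
  "contr_rank r T A = r (A \<union> T) - r T"

definition fscale :: "'a::field \<Rightarrow> (nat \<Rightarrow> 'a) \<Rightarrow> (nat \<Rightarrow> 'a)" where
  "fscale a v = (\<lambda>t. a * v t)"

definition pm_representable :: "nat \<Rightarrow> (nat \<Rightarrow> nat) set \<Rightarrow> 'a::field itself \<Rightarrow> bool" where
  "pm_representable N D _ \<longleftrightarrow>
     (\<exists>(K::nat) (V :: nat \<Rightarrow> (nat \<Rightarrow> 'a) set).
        (\<forall>j\<in>{1..N}. module.subspace fscale (V j) \<and> V j \<subseteq> {v. \<forall>t\<ge>K. v t = 0}) \<and>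
        (\<forall>A\<subseteq>{1..N}. vector_space.dim fscale (module.span fscale (\<Union>j\<in>A. V j)) = pm_rank D A))"

end

theory Submission
  imports Defs
begin

lemma fscale_vs: "vector_space (fscale :: 'a::field \<Rightarrow> (nat \<Rightarrow> 'a) \<Rightarrow> _)"
  by unfold_locales (auto simp: fscale_def fun_eq_iff algebra_simps)

interpretation fs: vector_space "fscale :: 'a::field \<Rightarrow> (nat \<Rightarrow> 'a) \<Rightarrow> _"
  by (rule fscale_vs)

lemma times_vs: "vector_space ((*) :: 'a::field \<Rightarrow> 'a \<Rightarrow> 'a)"
  by unfold_locales (auto simp: algebra_simps)

interpretation fsp: vector_space_pair "fscale :: 'a::field \<Rightarrow> (nat \<Rightarrow> 'a) \<Rightarrow> _" "(*) :: 'a \<Rightarrow> 'a \<Rightarrow> 'a"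
  by (intro vector_space_pair.intro fscale_vs times_vs)

lemma sum_fun_app: "(sum F A) t = (\<Sum>a\<in>A. F a t)"
  by (induct A rule: infinite_finite_induct) auto

lemma fscale_app: "fscale a v t = a * v t"
  by (simp add: fscale_def)

definition Zk :: "nat \<Rightarrow> (nat \<Rightarrow> 'a::zero) set" where
  "Zk K = {v. \<forall>t\<ge>K. v t = 0}"

lemma finite_Zk: "finite (Zk K :: (nat \<Rightarrow> 'a::{zero,finite}) set)"
proof -
  have "Zk K \<subseteq> {f. \<forall>x. (x \<in> {..<K} \<longrightarrow> f x \<in> (UNIV::'a set)) \<and> (x \<notin> {..<K} \<longrightarrow> f x = 0)}"
    by (auto simp: Zk_def)
  moreover have "finite {f. \<forall>x. (x \<in> {..<K} \<longrightarrow> f x \<in> (UNIV::'a set)) \<and> (x \<notin> {..<K} \<longrightarrow> f x = (0::'a))}"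
    by (rule finite_set_of_finite_funs) auto
  ultimately show ?thesis by (rule finite_subset)
qed

lemma subspace_Zk: "fs.subspace (Zk K :: (nat \<Rightarrow> 'a::field) set)"
  by (auto simp: fs.subspace_def Zk_def fscale_app)

lemma span_Zk: "X \<subseteq> Zk K \<Longrightarrow> fs.span X \<subseteq> (Zk K :: (nat \<Rightarrow> 'a::field) set)"
  using fs.span_minimal subspace_Zk by blast

lemma dim_mono_fin:
  assumes "finite (W :: (nat \<Rightarrow> 'a::field) set)" "V \<subseteq> fs.span W"
  shows "fs.dim V \<le> fs.dim W"
proof -
  obtain B where B: "B \<subseteq> W" "fs.independent B" "W \<subseteq> fs.span B" "card B = fs.dim W"
    using fs.basis_exists by blast
  have "finite B" using B assms finite_subset by blast
  have "fs.span W \<subseteq> fs.span B" using fs.span_mono[OF B(3)] by (simp add: fs.span_span)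
  then have "V \<subseteq> fs.span B" using assms(2) by blast
  then show ?thesis using fs.dim_le_card[OF _ \<open>finite B\<close>] B by auto
qed

lemma indep_card_le_dim:
  assumes "finite (Y :: (nat \<Rightarrow> 'a::field) set)" "fs.independent B" "B \<subseteq> fs.span Y"
  shows "finite B \<and> card B \<le> fs.dim Y"
proof -
  obtain A where A: "A \<subseteq> Y" "fs.independent A" "Y \<subseteq> fs.span A" "card A = fs.dim Y"
    using fs.basis_exists by blast
  have "finite A" using A assms finite_subset by blast
  have "fs.span Y \<subseteq> fs.span A" using fs.span_mono[OF A(3)] by (simp add: fs.span_span)
  then have "B \<subseteq> fs.span A" using assms(3) by blast
  from fs.independent_span_bound[OF \<open>finite A\<close> assms(2) this] A show ?thesis by simp
qed

lemma dim_eq_sub_span: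
  assumes "finite (Y :: (nat \<Rightarrow> 'a::field) set)" "X \<subseteq> Y" "fs.dim X = fs.dim Y"
  shows "Y \<subseteq> fs.span X"
proof
  fix y assume y: "y \<in> Y"
  show "y \<in> fs.span X"
  proof (rule ccontr)
    assume ny: "y \<notin> fs.span X"
    obtain A where A: "A \<subseteq> X" "fs.independent A" "X \<subseteq> fs.span A" "card A = fs.dim X"
      using fs.basis_exists by blast
    have "A \<subseteq> Y" using A(1) assms(2) by auto
    then have fA: "finite A" using assms(1) finite_subset by auto
    have "fs.span A \<subseteq> fs.span X" using A(1) by (rule fs.span_mono)
    then have yA: "y \<notin> fs.span A" using ny by blast
    then have ind: "fs.independent (insert y A)" by (rule fs.independent_insertI[OF _ A(2)])
    have "y \<notin> A" using yA fs.span_base[of y A] by auto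
    have "insert y A \<subseteq> Y" using y A(1) assms(2) by auto
    then have "insert y A \<subseteq> fs.span Y" using fs.span_superset[of Y] by auto
    from indep_card_le_dim[OF assms(1) ind this] have "card (insert y A) \<le> fs.dim Y" by simp
    with fA \<open>y \<notin> A\<close> A(4) assms(3) show False by simp
  qed
qed

lemma dim_le_card_fin: "finite (X :: (nat \<Rightarrow> 'a::field) set) \<Longrightarrow> fs.dim X \<le> card X"
  by (rule fs.dim_le_card') 

lemma indep_of_dim_card:
  assumes "finite (X :: (nat \<Rightarrow> 'a::field) set)" "fs.dim X = card X"
  shows "fs.independent X"
proof -
  obtain A where A: "A \<subseteq> X" "fs.independent A" "X \<subseteq> fs.span A" "card A = fs.dim X"
    using fs.basis_exists by blast
  have "A = X" using card_subset_eq[OF assms(1) A(1)] A(4) assms(2) by simp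
  with A show ?thesis by simp
qed

lemma submod_dim:
  assumes "finite (X :: (nat \<Rightarrow> 'a::field) set)" "finite Y"
  shows "fs.dim (X \<union> Y) + fs.dim (fs.span X \<inter> fs.span Y) \<le> fs.dim X + fs.dim Y"
proof -
  obtain B where B: "B \<subseteq> fs.span X \<inter> fs.span Y" "fs.independent B"
      "fs.span X \<inter> fs.span Y \<subseteq> fs.span B" "card B = fs.dim (fs.span X \<inter> fs.span Y)"
    using fs.basis_exists by blast
  obtain C where C: "B \<subseteq> C" "C \<subseteq> fs.span X" "fs.independent C" "fs.span X \<subseteq> fs.span C"
    using fs.maximal_independent_subset_extend[of B "fs.span X"] B by auto
  obtain D where D: "B \<subseteq> D" "D \<subseteq> fs.span Y" "fs.independent D" "fs.span Y \<subseteq> fs.span D"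
    using fs.maximal_independent_subset_extend[of B "fs.span Y"] B by auto
  have fC: "finite C" and cC: "card C \<le> fs.dim X"
    using indep_card_le_dim[OF assms(1) C(3) C(2)] by auto
  have fD: "finite D" and cD: "card D \<le> fs.dim Y"
    using indep_card_le_dim[OF assms(2) D(3) D(2)] by auto
  have "fs.span C \<subseteq> fs.span (C \<union> D)" "fs.span D \<subseteq> fs.span (C \<union> D)"
    by (simp_all add: fs.span_mono)
  then have "X \<union> Y \<subseteq> fs.span (C \<union> D)"
    using C(4) D(4) fs.span_superset[of X] fs.span_superset[of Y] by blast
  then have d1: "fs.dim (X \<union> Y) \<le> card (C \<union> D)" by (rule fs.dim_le_card) (simp add: fC fD)
  have "B \<subseteq> C \<inter> D" using C(1) D(1) by auto
  then have "card B \<le> card (C \<inter> D)" using fC by (intro card_mono) auto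
  moreover have "card (C \<union> D) + card (C \<inter> D) = card C + card D" using card_Un_Int[OF fC fD] by simp
  ultimately show ?thesis using d1 cC cD B(4) by linarith
qed

lemma lin_facts:
  assumes "Vector_Spaces.linear fscale ((*) :: 'a::field \<Rightarrow> _) \<phi>"
  shows "\<phi> 0 = 0" "\<phi> (x + y) = \<phi> x + \<phi> y" "\<phi> (fscale c x) = c * \<phi> x"
    "\<phi> (sum g S) = (\<Sum>a\<in>S. \<phi> (g a))" "\<phi> (x - y) = \<phi> x - \<phi> y"
proof -
  interpret l: Vector_Spaces.linear fscale "(*) :: 'a \<Rightarrow> _" \<phi> by (rule assms)
  show "\<phi> 0 = 0" "\<phi> (x + y) = \<phi> x + \<phi> y" "\<phi> (fscale c x) = c * \<phi> x"
    "\<phi> (sum g S) = (\<Sum>a\<in>S. \<phi> (g a))" "\<phi> (x - y) = \<phi> x - \<phi> y"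
    by (simp_all add: l.add l.scale l.sum l.diff)
qed

lemma linear_zero_span:
  assumes "Vector_Spaces.linear fscale ((*) :: 'a::field \<Rightarrow> _) \<phi>" "\<forall>x\<in>X. \<phi> x = 0" "v \<in> fs.span X"
  shows "\<phi> v = 0"
  using assms(3)
proof (induct rule: fs.span_induct_alt)
  case base then show ?case by (rule lin_facts(1)[OF assms(1)])
next
  case (step c x y)
  have "\<phi> (fscale c x + y) = c * \<phi> x + \<phi> y" by (simp only: lin_facts(2,3)[OF assms(1)])
  also have "\<dots> = 0" using step assms(2) by simp
  finally show ?case .
qed

lemma separate:
  assumes "finite (U :: (nat \<Rightarrow> 'a::field) set)" "v \<notin> fs.span U"
  shows "\<exists>\<phi>. Vector_Spaces.linear fscale ((*) :: 'a \<Rightarrow> _) \<phi> \<and> (\<forall>u\<in>fs.span U. \<phi> u = 0) \<and> \<phi> v = 1"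
proof -
  obtain A where A: "A \<subseteq> U" "fs.independent A" "U \<subseteq> fs.span A" "card A = fs.dim U"
    using fs.basis_exists by blast
  have "fs.span A \<subseteq> fs.span U" using A(1) by (rule fs.span_mono)
  then have yA: "v \<notin> fs.span A" using assms(2) by blast
  then have ind: "fs.independent (insert v A)" by (rule fs.independent_insertI[OF _ A(2)])
  have vA: "v \<notin> A" using yA fs.span_base[of v A] by auto
  obtain \<phi> where \<phi>: "Vector_Spaces.linear fscale ((*) :: 'a \<Rightarrow> _) \<phi>"
     "\<forall>x\<in>insert v A. \<phi> x = (\<lambda>x. if x = v then 1 else 0) x"
    using fsp.linear_independent_extend[OF ind, of "\<lambda>x. if x = v then 1 else 0"] by blast
  have "\<forall>u\<in>fs.span U. \<phi> u = 0"
  proof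
    fix u assume "u \<in> fs.span U"
    moreover have "fs.span U \<subseteq> fs.span A" using A(3) fs.span_mono[of U "fs.span A"] fs.span_span[of A] by simp
    ultimately have "u \<in> fs.span A" by blast
    moreover have "\<forall>x\<in>A. \<phi> x = 0" using \<phi>(2) vA by auto
    ultimately show "\<phi> u = 0" using linear_zero_span[OF \<phi>(1)] by blast
  qed
  then show ?thesis using \<phi> by auto
qed


definition bi :: "nat \<Rightarrow> nat \<Rightarrow> nat" where "bi n r = (r - 1) div n + 1"
definition po :: "nat \<Rightarrow> nat \<Rightarrow> nat" where "po n r = (r - 1) mod n + 1"

lemma blk_a:
  assumes "j \<ge> 1" "s \<in> {1..n}"
  shows "bi n ((j-1)*n+s) = j" "po n ((j-1)*n+s) = s"
proof -
  obtain j' where j': "j = Suc j'" using assms(1) by (cases j) auto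
  obtain s' where s': "s = Suc s'" using assms(2) by (cases s) auto
  have e: "(j-1)*n+s - 1 = j' * n + s'" using j' s' by simp
  have s: "s' < n" using assms s' by auto
  show "bi n ((j-1)*n+s) = j" unfolding bi_def e using s j' by simp
  show "po n ((j-1)*n+s) = s" unfolding po_def e using s s' by simp
qed

lemma blk_b:
  assumes "r \<in> {1..m*n}"
  shows "bi n r \<in> {1..m}" "po n r \<in> {1..n}" "(bi n r - 1)*n + po n r = r"
proof -
  have n: "n > 0" using assms by (cases n) auto
  have "r - 1 < m * n" using assms by auto
  then have "(r - 1) div n < m" using n by (simp add: div_less_iff_less_mult)
  then show "bi n r \<in> {1..m}" by (simp add: bi_def)
  show "po n r \<in> {1..n}" using n by (simp add: po_def Suc_leI)
  have "(r - 1) div n * n + (r - 1) mod n = r - 1" by simp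
  then show "(bi n r - 1)*n + po n r = r" using assms by (simp add: bi_def po_def)
qed

lemma blk_range: "(j::nat) \<in> {1..m} \<Longrightarrow> s \<in> {1..n} \<Longrightarrow> (j-1)*n+s \<in> {1..m*n}"
proof -
  assume j: "j \<in> {1..m}" and s: "s \<in> {1..n}"
  have "(j-1)*n + s \<le> (j-1)*n + n" using s by auto
  also have "\<dots> = j * n" using j by (cases j) auto
  also have "\<dots> \<le> m * n" using j by simp
  finally show ?thesis using s by simp
qed

definition good :: "nat \<Rightarrow> nat \<Rightarrow> nat \<Rightarrow> (nat \<Rightarrow> nat \<Rightarrow> 'a::field) \<Rightarrow> nat \<Rightarrow> nat set \<Rightarrow> nat \<Rightarrow> bool" where
  "good m n c L fi Hi d \<longleftrightarrow> (\<forall>z\<in>msgs m n. (\<forall>j\<in>Hi. z j = (\<lambda>_. 0)) \<longrightarrow>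
      card {k. lin_encode m n c L z k \<noteq> 0} \<le> 2 * d \<longrightarrow> z fi = (\<lambda>_. 0))"

lemma lin_encode_diff:
  "lin_encode m n c L (\<lambda>j t. x j t - x' j t) k = lin_encode m n c L x k - lin_encode m n c L x' k"
  by (simp add: lin_encode_def left_diff_distrib sum_subtractf)

lemma lin_encode_zero: "lin_encode m n c L (\<lambda>j t. 0) k = 0"
  by (simp add: lin_encode_def)

lemma lin_encode_fvec: "lin_encode m n c L x \<in> fvec c"
  by (simp add: lin_encode_def fvec_def)

lemma msgs_diff: "(x :: nat \<Rightarrow> nat \<Rightarrow> 'a::field) \<in> msgs m n \<Longrightarrow> x' \<in> msgs m n \<Longrightarrow> (\<lambda>j t. x j t - x' j t) \<in> msgs m n"
  by (auto simp: msgs_def fvec_def fun_eq_iff)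

lemma fvec_supp: "e \<in> fvec c \<Longrightarrow> {k. e k \<noteq> 0} \<subseteq> {1..c}"
  by (auto simp: fvec_def)

lemma decoder_of_good:
  fixes L :: "nat \<Rightarrow> nat \<Rightarrow> 'a::field"
  assumes g: "good m n c L fi Hi d"
  shows "\<exists>\<psi>. \<forall>x\<in>msgs m n. \<forall>e\<in>fvec c. hweight e \<le> d \<longrightarrow>
           \<psi> (\<lambda>t. lin_encode m n c L x t + e t) (side_info Hi x) = x fi"
proof -
  let ?C = "lin_encode m n c L"
  have uniq: "x fi = x' fi" if x: "x \<in> msgs m n" and x': "x' \<in> msgs m n" and e: "e \<in> fvec c" and e': "e' \<in> fvec c"
    and we: "hweight e \<le> d" and we': "hweight e' \<le> d"
    and eq: "(\<lambda>t. ?C x t + e t) = (\<lambda>t. ?C x' t + e' t)" and si: "side_info Hi x = side_info Hi x'" for x x' e e'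
  proof -
    define z where "z = (\<lambda>j t. x j t - x' j t)"
    have zm: "z \<in> msgs m n" unfolding z_def by (rule msgs_diff[OF x x'])
    have zH: "\<forall>j\<in>Hi. z j = (\<lambda>_. 0)"
    proof
      fix j assume j: "j \<in> Hi"
      have "side_info Hi x j = side_info Hi x' j" using si by simp
      then have "x j = x' j" using j by (simp add: side_info_def)
      then show "z j = (\<lambda>_. 0)" by (simp add: z_def)
    qed
    have Cz: "?C z k = e' k - e k" for k
    proof -
      have "?C x k + e k = ?C x' k + e' k" using fun_cong[OF eq, of k] by simp
      then show ?thesis unfolding z_def lin_encode_diff by (simp add: algebra_simps)
    qed
    have sub: "{k. ?C z k \<noteq> 0} \<subseteq> {k. e k \<noteq> 0} \<union> {k. e' k \<noteq> 0}" using Cz by auto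
    have f1: "finite {k. e k \<noteq> 0}" using fvec_supp[OF e] finite_subset by blast
    have f2: "finite {k. e' k \<noteq> 0}" using fvec_supp[OF e'] finite_subset by blast
    have "card {k. ?C z k \<noteq> 0} \<le> card ({k. e k \<noteq> 0} \<union> {k. e' k \<noteq> 0})"
      using sub f1 f2 by (intro card_mono) auto
    also have "\<dots> \<le> card {k. e k \<noteq> 0} + card {k. e' k \<noteq> 0}" by (rule card_Un_le)
    also have "\<dots> \<le> 2 * d" using we we' by (simp add: hweight_def)
    finally have "card {k. ?C z k \<noteq> 0} \<le> 2 * d" .
    with g zm zH have "z fi = (\<lambda>_. 0)" unfolding good_def by blast
    then show "x fi = x' fi" by (auto simp: z_def fun_eq_iff)
  qed
  define \<psi> where "\<psi> y h = (SOME v. \<exists>x\<in>msgs m n. \<exists>e\<in>fvec c. hweight e \<le> d \<and>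
      y = (\<lambda>t. ?C x t + e t) \<and> h = side_info Hi x \<and> v = x fi)" for y h
  have "\<psi> (\<lambda>t. ?C x t + e t) (side_info Hi x) = x fi"
    if x: "x \<in> msgs m n" and e: "e \<in> fvec c" and we: "hweight e \<le> d" for x e
    unfolding \<psi>_def
  proof (rule some_equality)
    show "\<exists>x'\<in>msgs m n. \<exists>e'\<in>fvec c. hweight e' \<le> d \<and> (\<lambda>t. ?C x t + e t) = (\<lambda>t. ?C x' t + e' t) \<and>
        side_info Hi x = side_info Hi x' \<and> x fi = x' fi" using x e we by blast
  next
    fix v assume "\<exists>x'\<in>msgs m n. \<exists>e'\<in>fvec c. hweight e' \<le> d \<and> (\<lambda>t. ?C x t + e t) = (\<lambda>t. ?C x' t + e' t) \<and>
        side_info Hi x = side_info Hi x' \<and> v = x' fi"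
    then obtain x' e' where "x' \<in> msgs m n" "e' \<in> fvec c" "hweight e' \<le> d"
      "(\<lambda>t. ?C x t + e t) = (\<lambda>t. ?C x' t + e' t)" "side_info Hi x = side_info Hi x'" "v = x' fi" by blast
    then show "v = x fi" using uniq[OF x _ e _ we] by metis
  qed
  then show ?thesis by blast
qed

lemma good_of_decoder:
  fixes L :: "nat \<Rightarrow> nat \<Rightarrow> 'a::field"
  assumes dec: "\<exists>\<psi>. \<forall>x\<in>msgs m n. \<forall>e\<in>fvec c. hweight e \<le> d \<longrightarrow>
           \<psi> (\<lambda>t. lin_encode m n c L x t + e t) (side_info Hi x) = x fi"
  shows "good m n c L fi Hi d"
  unfolding good_def
proof (intro ballI impI)
  let ?C = "lin_encode m n c L"
  fix z assume zm: "z \<in> msgs m n" and zH: "\<forall>j\<in>Hi. z j = (\<lambda>_. 0)" and card: "card {k. ?C z k \<noteq> 0} \<le> 2 * d"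
  obtain \<psi> where \<psi>: "\<forall>x\<in>msgs m n. \<forall>e\<in>fvec c. hweight e \<le> d \<longrightarrow>
           \<psi> (\<lambda>t. ?C x t + e t) (side_info Hi x) = x fi" using dec by blast
  define P where "P = {k. ?C z k \<noteq> 0}"
  have PC: "P \<subseteq> {1..c}" unfolding P_def using fvec_supp[OF lin_encode_fvec] by blast
  have fP: "finite P" using PC finite_subset by blast
  obtain P1 where P1: "P1 \<subseteq> P" "card P1 = min d (card P)"
    using obtain_subset_with_card_n[of "min d (card P)" P] by auto
  define P2 where "P2 = P - P1"
  have fP1: "finite P1" using P1(1) fP finite_subset by blast
  have cP2: "card P2 \<le> d" unfolding P2_def using P1 fP1 card P_def by (simp add: card_Diff_subset)
  define e1 where "e1 = (\<lambda>k. if k \<in> P1 then - ?C z k else 0)"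
  define e2 where "e2 = (\<lambda>k. if k \<in> P2 then ?C z k else 0)"
  have e1v: "e1 \<in> fvec c" using P1(1) PC by (auto simp: e1_def fvec_def)
  have e2v: "e2 \<in> fvec c" using PC by (auto simp: e2_def fvec_def P2_def)
  have "{k. e1 k \<noteq> 0} \<subseteq> P1" by (auto simp: e1_def)
  then have "card {k. e1 k \<noteq> 0} \<le> card P1" by (rule card_mono[OF fP1])
  then have w1: "hweight e1 \<le> d" unfolding hweight_def using P1(2) by simp
  have "{k. e2 k \<noteq> 0} \<subseteq> P2" by (auto simp: e2_def)
  moreover have "finite P2" using fP by (simp add: P2_def)
  ultimately have "card {k. e2 k \<noteq> 0} \<le> card P2" by (simp add: card_mono)
  then have w2: "hweight e2 \<le> d" unfolding hweight_def using cP2 by simp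
  have z0: "(\<lambda>j t. 0::'a) \<in> msgs m n" by (simp add: msgs_def fvec_def)
  have eq: "(\<lambda>t. ?C z t + e1 t) = (\<lambda>t. ?C (\<lambda>j t. 0) t + e2 t)"
  proof
    fix t show "?C z t + e1 t = ?C (\<lambda>j t. 0) t + e2 t"
      using P1(1) unfolding lin_encode_zero e1_def e2_def P2_def P_def by auto
  qed
  have si: "side_info Hi z = side_info Hi (\<lambda>j t. 0)"
    using zH by (auto simp: side_info_def fun_eq_iff)
  have "z fi = \<psi> (\<lambda>t. ?C z t + e1 t) (side_info Hi z)" using \<psi> zm e1v w1 by simp
  also have "\<dots> = \<psi> (\<lambda>t. ?C (\<lambda>j t. 0) t + e2 t) (side_info Hi (\<lambda>j t. 0))" unfolding eq si ..
  also have "\<dots> = (\<lambda>_. 0)" using \<psi> z0 e2v w2 by simp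
  finally show "z fi = (\<lambda>_. 0)" .
qed


definition pmD :: "nat \<Rightarrow> (nat set \<Rightarrow> nat) \<Rightarrow> (nat \<Rightarrow> nat) set" where
  "pmD N r = {u. (\<forall>j. j \<notin> {1..N} \<longrightarrow> u j = 0) \<and> (\<forall>A\<subseteq>{1..N}. (\<Sum>j\<in>A. u j) \<le> r A)}"

locale rkf =
  fixes N :: nat and r :: "nat set \<Rightarrow> nat"
  assumes r0: "r {} = 0"
    and rmono: "\<And>A B. A \<subseteq> B \<Longrightarrow> B \<subseteq> {1..N} \<Longrightarrow> r A \<le> r B"
    and rsub: "\<And>A B. A \<subseteq> {1..N} \<Longrightarrow> B \<subseteq> {1..N} \<Longrightarrow> r (A \<union> B) + r (A \<inter> B) \<le> r A + r B"
begin

abbreviation "D \<equiv> pmD N r"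

lemma D_le: "u \<in> D \<Longrightarrow> A \<subseteq> {1..N} \<Longrightarrow> (\<Sum>j\<in>A. u j) \<le> r A"
  by (simp add: pmD_def)

lemma tight_union:
  assumes u: "u \<in> D" and A: "A \<subseteq> {1..N}" and B: "B \<subseteq> {1..N}"
    and tA: "(\<Sum>j\<in>A. u j) = r A" and tB: "(\<Sum>j\<in>B. u j) = r B"
  shows "(\<Sum>j\<in>A \<union> B. u j) = r (A \<union> B)"
proof -
  have fA: "finite A" using A finite_subset by blast
  have fB: "finite B" using B finite_subset by blast
  have e: "(\<Sum>j\<in>A \<union> B. u j) + (\<Sum>j\<in>A \<inter> B. u j) = (\<Sum>j\<in>A. u j) + (\<Sum>j\<in>B. u j)"
    by (rule sum.union_inter[OF fA fB])
  have l1: "(\<Sum>j\<in>A \<union> B. u j) \<le> r (A \<union> B)" using D_le[OF u] A B by simp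
  have l2: "(\<Sum>j\<in>A \<inter> B. u j) \<le> r (A \<inter> B)" using D_le[OF u, of "A \<inter> B"] A by auto
  have "r (A \<union> B) + r (A \<inter> B) \<le> r A + r B" by (rule rsub[OF A B])
  with e l1 l2 tA tB show ?thesis by linarith
qed

lemma tight_cover:
  assumes u: "u \<in> D" and fJ: "finite J"
    and h: "\<forall>j\<in>J. \<exists>A\<subseteq>{1..N}. j \<in> A \<and> (\<Sum>i\<in>A. u i) = r A"
  shows "\<exists>U\<subseteq>{1..N}. J \<subseteq> U \<and> (\<Sum>i\<in>U. u i) = r U"
  using fJ h
proof (induct J rule: finite_induct)
  case empty then show ?case using r0 by (intro exI[of _ "{}"]) auto
next
  case (insert j J)
  then obtain U where U: "U \<subseteq> {1..N}" "J \<subseteq> U" "(\<Sum>i\<in>U. u i) = r U" by auto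
  from insert(4) obtain A where A: "A \<subseteq> {1..N}" "j \<in> A" "(\<Sum>i\<in>A. u i) = r A" by auto
  have "(\<Sum>i\<in>U \<union> A. u i) = r (U \<union> A)" by (rule tight_union[OF u U(1) A(1) U(3) A(3)])
  then show ?case using U A by (intro exI[of _ "U \<union> A"]) auto
qed

lemma sum_upd:
  fixes u :: "nat \<Rightarrow> nat"
  assumes "finite A" "j \<in> A"
  shows "(\<Sum>i\<in>A. (u(j := u j + 1)) i) = (\<Sum>i\<in>A. u i) + 1"
proof -
  have e1: "(\<Sum>i\<in>A. (u(j := u j + 1)) i) = (u(j := u j + 1)) j + (\<Sum>i\<in>A - {j}. (u(j := u j + 1)) i)"
    by (rule sum.remove[OF assms])
  have e2: "(\<Sum>i\<in>A - {j}. (u(j := u j + 1)) i) = (\<Sum>i\<in>A - {j}. u i)"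
    by (rule sum.cong) auto
  have e3: "(\<Sum>i\<in>A. u i) = u j + (\<Sum>i\<in>A - {j}. u i)" by (rule sum.remove[OF assms])
  have e4: "(u(j := u j + 1)) j = u j + 1" by simp
  show ?thesis unfolding e1 e2 e3 e4 by linarith
qed

lemma not_in_tight:
  assumes u: "u \<in> D" and j: "j \<in> {1..N}" and nu: "u(j := u j + 1) \<notin> D"
  shows "\<exists>A\<subseteq>{1..N}. j \<in> A \<and> (\<Sum>i\<in>A. u i) = r A"
proof -
  define w where "w = u(j := u j + 1)"
  have supp: "\<forall>i. i \<notin> {1..N} \<longrightarrow> w i = 0" using u j by (auto simp: pmD_def w_def)
  have "w \<notin> {u. (\<forall>j. j \<notin> {1..N} \<longrightarrow> u j = 0) \<and> (\<forall>A\<subseteq>{1..N}. (\<Sum>j\<in>A. u j) \<le> r A)}"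
    using nu unfolding pmD_def w_def .
  then have "\<not> (\<forall>A\<subseteq>{1..N}. (\<Sum>j\<in>A. w j) \<le> r A)" using supp by (simp only: mem_Collect_eq) blast
  then obtain A where A: "A \<subseteq> {1..N}" "\<not> (\<Sum>i\<in>A. (u(j := u j + 1)) i) \<le> r A"
    unfolding w_def by blast
  have fA: "finite A" using A(1) finite_subset by blast
  have jA: "j \<in> A"
  proof (rule ccontr)
    assume "j \<notin> A"
    then have "(\<Sum>i\<in>A. (u(j := u j + 1)) i) = (\<Sum>i\<in>A. u i)" by (intro sum.cong) auto
    with A D_le[OF u A(1)] show False by simp
  qed
  have "(\<Sum>i\<in>A. u i) = r A" using sum_upd[OF fA jA, of u] A(2) D_le[OF u A(1)] by linarith
  with A jA show ?thesis by blast
qed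

lemma D_fin: "finite D"
proof -
  have "D \<subseteq> {f. \<forall>x. (x \<in> {1..N} \<longrightarrow> f x \<in> {0..r {1..N}}) \<and> (x \<notin> {1..N} \<longrightarrow> f x = 0)}"
  proof safe
    fix u x assume u: "u \<in> D" and x: "x \<in> {1..N}"
    have "(\<Sum>i\<in>{x}. u i) \<le> r {x}" using D_le[OF u, of "{x}"] x by auto
    moreover have "r {x} \<le> r {1..N}" using x by (intro rmono) auto
    ultimately show "u x \<in> {0..r {1..N}}" by simp
  next
    fix u x assume "u \<in> D" "x \<notin> {1..N}" then show "u x = 0" by (auto simp: pmD_def)
  qed
  moreover have "finite {f. \<forall>x. (x \<in> {1..N} \<longrightarrow> f x \<in> {0..r {1..N}}) \<and> (x \<notin> {1..N} \<longrightarrow> f x = (0::nat))}"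
    by (rule finite_set_of_finite_funs) auto
  ultimately show ?thesis by (rule finite_subset)
qed

lemma zero_D: "(\<lambda>_. 0) \<in> D"
  by (auto simp: pmD_def)

lemma is_pm: "discrete_polymatroid N D"
  unfolding discrete_polymatroid_def
proof (intro conjI ballI allI impI)
  show "D \<noteq> {}" using zero_D by blast
  show "finite D" by (rule D_fin)
next
  fix u j assume "u \<in> D" "j \<notin> {1..N}" then show "u j = 0" by (auto simp: pmD_def)
next
  fix u v assume u: "u \<in> D" and le: "\<forall>j. v j \<le> u j"
  show "v \<in> D" unfolding pmD_def
  proof (intro CollectI conjI allI impI)
    fix j assume "j \<notin> {1..N}" then show "v j = 0" using u le[rule_format, of j] by (simp add: pmD_def)
  next
    fix A assume A: "A \<subseteq> {1..N}"
    have "(\<Sum>j\<in>A. v j) \<le> (\<Sum>j\<in>A. u j)" using le by (intro sum_mono) auto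
    also have "\<dots> \<le> r A" by (rule D_le[OF u A])
    finally show "(\<Sum>j\<in>A. v j) \<le> r A" .
  qed
next
  fix u v assume u: "u \<in> D" and v: "v \<in> D" and lt: "(\<Sum>j\<in>{1..N}. u j) < (\<Sum>j\<in>{1..N}. v j)"
  show "\<exists>w\<in>D. (\<forall>j. u j \<le> w j) \<and> u \<noteq> w \<and> (\<forall>j. w j \<le> max (u j) (v j))"
  proof (rule ccontr)
    assume nw: "\<not> ?thesis"
    define J where "J = {j\<in>{1..N}. u j < v j}"
    have "\<forall>j\<in>J. \<exists>A\<subseteq>{1..N}. j \<in> A \<and> (\<Sum>i\<in>A. u i) = r A"
    proof
      fix j assume j: "j \<in> J"
      define w where "w = u(j := u j + 1)"
      have nw': "\<not> ((\<forall>i. u i \<le> w i) \<and> u \<noteq> w \<and> (\<forall>i. w i \<le> max (u i) (v i)))" if "w \<in> D"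
        using nw that by (simp only: bex_simps de_Morgan_conj not_not)
      have "w \<notin> D"
      proof
        assume wD: "w \<in> D"
        have "\<forall>i. u i \<le> (u(j := u j + 1)) i" by auto
        moreover have "u \<noteq> u(j := u j + 1)"
        proof
          assume "u = u(j := u j + 1)"
          then have "u j = (u(j := u j + 1)) j" by simp
          then show False by simp
        qed
        moreover have "\<forall>i. (u(j := u j + 1)) i \<le> max (u i) (v i)" using j by (auto simp: J_def)
        ultimately show False using nw'[OF wD] unfolding w_def by blast
      qed
      then have "u(j := u j + 1) \<notin> D" unfolding w_def .
      then show "\<exists>A\<subseteq>{1..N}. j \<in> A \<and> (\<Sum>i\<in>A. u i) = r A"
        using not_in_tight[OF u] j by (auto simp: J_def)
    qed
    moreover have "finite J" by (simp add: J_def)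
    ultimately have "\<exists>U\<subseteq>{1..N}. J \<subseteq> U \<and> (\<Sum>i\<in>U. u i) = r U"
      by (rule tight_cover[OF u, rotated])
    then obtain U where U: "U \<subseteq> {1..N}" "J \<subseteq> U" "(\<Sum>i\<in>U. u i) = r U"
      by blast
    have fU: "finite U" using U(1) finite_subset by blast
    have "(\<Sum>j\<in>{1..N}. v j) = (\<Sum>j\<in>{1..N} - U. v j) + (\<Sum>j\<in>U. v j)"
      by (rule sum.subset_diff[OF U(1)]) simp
    also have "\<dots> = (\<Sum>j\<in>U. v j) + (\<Sum>j\<in>{1..N} - U. v j)" by simp
    also have "\<dots> \<le> (\<Sum>j\<in>U. u j) + (\<Sum>j\<in>{1..N} - U. u j)"
    proof (rule add_mono)
      show "(\<Sum>j\<in>U. v j) \<le> (\<Sum>j\<in>U. u j)" using D_le[OF v U(1)] U(3) by simp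
      show "(\<Sum>j\<in>{1..N} - U. v j) \<le> (\<Sum>j\<in>{1..N} - U. u j)"
        using U(2) by (intro sum_mono) (auto simp: J_def)
    qed
    also have "\<dots> = (\<Sum>j\<in>{1..N}. u j)"
      using sum.subset_diff[OF U(1), of u] by simp
    finally show False using lt by simp
  qed
qed

lemma pm_rank_eq:
  assumes A: "A \<subseteq> {1..N}"
  shows "pm_rank D A = r A"
proof -
  have fA: "finite A" using A finite_subset by blast
  have Seq: "{(\<Sum>j\<in>A. u j) | u. u \<in> D} = (\<lambda>u. \<Sum>j\<in>A. u j) ` D" by auto
  have fS: "finite {(\<Sum>j\<in>A. u j) | u. u \<in> D}" unfolding Seq using D_fin by (rule finite_imageI)
  have ne: "{(\<Sum>j\<in>A. u j) | u. u \<in> D} \<noteq> {}" using zero_D by blast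
  have le: "pm_rank D A \<le> r A"
    unfolding pm_rank_def Max_le_iff[OF fS ne] using D_le[OF _ A] by blast
  define DA where "DA = {u\<in>D. \<forall>j. j \<notin> A \<longrightarrow> u j = 0}"
  have fDA: "finite DA" using D_fin by (simp add: DA_def)
  have neA: "(\<lambda>_. 0) \<in> DA" using zero_D by (simp add: DA_def)
  define M where "M = Max ((\<lambda>u. \<Sum>j\<in>A. u j) ` DA)"
  have "M \<in> (\<lambda>u. \<Sum>j\<in>A. u j) ` DA" unfolding M_def using fDA neA by (intro Max_in) auto
  then obtain u where u: "u \<in> DA" "(\<Sum>j\<in>A. u j) = M" by blast
  have maxu: "(\<Sum>j\<in>A. w j) \<le> (\<Sum>j\<in>A. u j)" if "w \<in> DA" for w
    unfolding u(2) M_def by (rule Max_ge[OF finite_imageI[OF fDA]]) (rule imageI[OF that])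
  have uD: "u \<in> D" using u(1) by (simp add: DA_def)
  have "\<forall>j\<in>A. \<exists>B\<subseteq>{1..N}. j \<in> B \<and> (\<Sum>i\<in>B. u i) = r B"
  proof
    fix j assume j: "j \<in> A"
    have "u(j := u j + 1) \<notin> D"
    proof
      assume "u(j := u j + 1) \<in> D"
      then have "u(j := u j + 1) \<in> DA" using u(1) j by (auto simp: DA_def)
      from maxu[OF this] sum_upd[OF fA j, of u] show False by simp
    qed
    moreover have "j \<in> {1..N}" using j A by blast
    ultimately show "\<exists>B\<subseteq>{1..N}. j \<in> B \<and> (\<Sum>i\<in>B. u i) = r B"
      using not_in_tight[OF uD] by blast
  qed
  then obtain U where U: "U \<subseteq> {1..N}" "A \<subseteq> U" "(\<Sum>i\<in>U. u i) = r U"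
    using tight_cover[OF uD fA] by blast
  have fU: "finite U" using U(1) finite_subset by blast
  have "(\<Sum>i\<in>U. u i) = (\<Sum>i\<in>A. u i)"
    using u(1) U(2) fU by (intro sum.mono_neutral_right) (auto simp: DA_def)
  moreover have "r A \<le> r U" by (rule rmono[OF U(2) U(1)])
  ultimately have "r A \<le> (\<Sum>i\<in>A. u i)" using U(3) by simp
  moreover have "(\<Sum>i\<in>A. u i) \<le> pm_rank D A"
    unfolding pm_rank_def using uD by (intro Max_ge[OF fS]) blast
  ultimately show ?thesis using le by simp
qed

end

definition uv :: "nat \<Rightarrow> nat \<Rightarrow> 'a::field" where
  "uv t = (\<lambda>i. if i = t then 1 else 0)"

definition gv :: "nat \<Rightarrow> nat \<Rightarrow> (nat \<Rightarrow> nat \<Rightarrow> 'a::field) \<Rightarrow> nat \<Rightarrow> nat \<Rightarrow> 'a" where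
  "gv m n L k = (\<lambda>t. if t \<in> {1..m*n} then L t k else if t = m*n + k then 1 else 0)"

definition blkset :: "nat \<Rightarrow> nat \<Rightarrow> nat set" where
  "blkset n j = (\<lambda>s. (j-1)*n+s) ` {1..n}"

definition Gen :: "nat \<Rightarrow> nat \<Rightarrow> nat \<Rightarrow> (nat \<Rightarrow> nat \<Rightarrow> 'a::field) \<Rightarrow> nat \<Rightarrow> (nat \<Rightarrow> 'a) set" where
  "Gen m n c L j = (if j \<in> {1..m} then uv ` blkset n j
     else if j \<in> {m+1..m+c} then {uv (m*n + (j - m))}
     else if j \<in> {m+c+1..m+2*c} then {gv m n L (j - m - c)} else {})"

lemma uv_inj: "inj uv"
proof (rule injI)
  fix a b assume "uv a = (uv b :: nat \<Rightarrow> 'a)"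
  then have "uv a a = (uv b a :: 'a)" by simp
  then show "a = b" by (simp add: uv_def split: if_splits)
qed

lemma uv_nz: "uv t \<noteq> (0 :: nat \<Rightarrow> 'a::field)"
proof
  assume "uv t = (0 :: nat \<Rightarrow> 'a)"
  then have "uv t t = (0::'a)" by simp
  then show False by (simp add: uv_def)
qed

lemma indep_uv: "finite S \<Longrightarrow> fs.independent (uv ` S :: (nat \<Rightarrow> 'a::field) set)"
proof (rule fs.independent_if_scalars_zero)
  assume fS: "finite S"
  then show "finite (uv ` S :: (nat \<Rightarrow> 'a) set)" by simp
  fix f :: "(nat \<Rightarrow> 'a) \<Rightarrow> 'a" and x :: "nat \<Rightarrow> 'a"
  assume s: "(\<Sum>x\<in>uv ` S. fscale (f x) x) = 0" and x: "x \<in> uv ` S"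
  then obtain t where t: "t \<in> S" "x = uv t" by blast
  have "(\<Sum>x\<in>uv ` S. fscale (f x) x) t = 0" using s by simp
  then have "(\<Sum>y\<in>uv ` S. f y * y t) = 0" by (simp add: sum_fun_app fscale_app)
  moreover have "(\<Sum>y\<in>uv ` S. f y * y t) = f (uv t)"
  proof -
    have "(\<Sum>y\<in>uv ` S. f y * y t) = (\<Sum>y\<in>uv ` S. if y = uv t then f y else 0)"
    proof (rule sum.cong)
      fix y :: "nat \<Rightarrow> 'a" assume "y \<in> uv ` S"
      then obtain s where ys: "y = uv s" by blast
      show "f y * y t = (if y = uv t then f y else 0)"
      proof (cases "s = t")
        case True then show ?thesis by (simp add: ys uv_def)
      next
        case False
        then have "y \<noteq> uv t" using inj_eq[OF uv_inj, of s t] ys by (auto simp: uv_def)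
        moreover have "y t = 0" using False ys by (simp add: uv_def)
        ultimately show ?thesis by simp
      qed
    qed simp
    also have "\<dots> = f (uv t)" using t fS by (simp add: sum.delta')
    finally show ?thesis .
  qed
  ultimately show "f x = 0" using t by simp
qed

lemma dim_uv: "finite S \<Longrightarrow> fs.dim (uv ` S :: (nat \<Rightarrow> 'a::field) set) = card S"
proof -
  assume fin: "finite S"
  have "fs.dim (uv ` S :: (nat \<Rightarrow> 'a) set) = card (uv ` S :: (nat \<Rightarrow> 'a) set)"
    by (rule fs.dim_eq_card_independent[OF indep_uv[OF fin]])
  also have "\<dots> = card S" by (rule card_image[OF inj_on_subset[OF uv_inj subset_UNIV]])
  finally show ?thesis .
qed

lemma dim_single: "v \<noteq> (0 :: nat \<Rightarrow> 'a::field) \<Longrightarrow> fs.dim {v} = 1"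
proof -
  assume v: "v \<noteq> 0"
  have "v \<notin> fs.span {}" using v by simp
  then have "fs.independent (insert v {})" by (rule fs.independent_insertI) (rule fs.independent_empty)
  then show ?thesis using fs.dim_eq_card_independent by fastforce
qed

lemma dim_empty: "fs.dim ({} :: (nat \<Rightarrow> 'a::field) set) = 0"
  using fs.dim_eq_card_independent[OF fs.independent_empty] by simp

lemma gv_decomp:
  "gv m n L k = (\<Sum>t\<in>{1..m*n}. fscale (L t k) (uv t)) + uv (m*n+k)"
  if "k \<ge> 1"
proof
  fix i
  have "(\<Sum>t\<in>{1..m*n}. fscale (L t k) (uv t)) i = (\<Sum>t\<in>{1..m*n}. if i = t then L t k else 0)"
    by (simp add: sum_fun_app fscale_app uv_def if_distrib cong: if_cong)
  also have "\<dots> = (if i \<in> {1..m*n} then L i k else 0)" by (simp add: sum.delta)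
  finally show "gv m n L k i = ((\<Sum>t\<in>{1..m*n}. fscale (L t k) (uv t)) + uv (m*n+k)) i"
    using that by (auto simp: gv_def uv_def)
qed

lemma gv_nz: "k \<ge> 1 \<Longrightarrow> gv m n L k \<noteq> (0 :: nat \<Rightarrow> 'a::field)"
proof
  assume k: "k \<ge> 1" and "gv m n L k = (0 :: nat \<Rightarrow> 'a)"
  then have "gv m n L k (m*n+k) = (0::'a)" by simp
  then show False using k by (simp add: gv_def)
qed

lemma absorb:
  assumes "finite (X \<union> Y :: (nat \<Rightarrow> 'a::field) set)" "Y \<subseteq> fs.span X"
  shows "fs.dim (X \<union> Y) = fs.dim X"
proof (rule antisym)
  have fX: "finite X" using assms(1) by simp
  have "X \<union> Y \<subseteq> fs.span X" using assms(2) fs.span_superset[of X] by blast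
  then show "fs.dim (X \<union> Y) \<le> fs.dim X" by (rule dim_mono_fin[OF fX])
  have "X \<subseteq> fs.span (X \<union> Y)" using fs.span_superset[of "X \<union> Y"] by blast
  then show "fs.dim X \<le> fs.dim (X \<union> Y)" by (rule dim_mono_fin[OF assms(1)])
qed

lemma span_UN_span:
  "fs.span (\<Union>j\<in>A. fs.span (G j)) = fs.span (\<Union>j\<in>A. G j :: (nat \<Rightarrow> 'a::field) set)"
proof
  have "(\<Union>j\<in>A. fs.span (G j)) \<subseteq> fs.span (\<Union>j\<in>A. G j)"
  proof (rule UN_least)
    fix j assume "j \<in> A"
    then have "G j \<subseteq> (\<Union>j\<in>A. G j)" by blast
    then show "fs.span (G j) \<subseteq> fs.span (\<Union>j\<in>A. G j)" by (rule fs.span_mono)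
  qed
  then have "fs.span (\<Union>j\<in>A. fs.span (G j)) \<subseteq> fs.span (fs.span (\<Union>j\<in>A. G j))" by (rule fs.span_mono)
  then show "fs.span (\<Union>j\<in>A. fs.span (G j)) \<subseteq> fs.span (\<Union>j\<in>A. G j)" by (simp add: fs.span_span)
  have "(\<Union>j\<in>A. G j) \<subseteq> (\<Union>j\<in>A. fs.span (G j))" using fs.span_superset by blast
  then show "fs.span (\<Union>j\<in>A. G j) \<subseteq> fs.span (\<Union>j\<in>A. fs.span (G j))" by (rule fs.span_mono)
qed


lemma blk_union: "(\<Union>j\<in>{1..m}. blkset n j) = {1..m*n}"
proof
  show "(\<Union>j\<in>{1..m}. blkset n j) \<subseteq> {1..m*n}"
  proof
    fix r assume "r \<in> (\<Union>j\<in>{1..m}. blkset n j)"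
    then obtain j s where "j \<in> {1..m}" "s \<in> {1..n}" "r = (j-1)*n+s" unfolding blkset_def by blast
    then show "r \<in> {1..m*n}" using blk_range[of j m s n] by simp
  qed
  show "{1..m*n} \<subseteq> (\<Union>j\<in>{1..m}. blkset n j)"
  proof
    fix r assume r: "r \<in> {1..m*n}"
    have "r \<in> blkset n (bi n r)" using blk_b[OF r] unfolding blkset_def by (metis image_eqI)
    then show "r \<in> (\<Union>j\<in>{1..m}. blkset n j)" using blk_b(1)[OF r] by blast
  qed
qed

locale fwd =
  fixes m n c :: nat and L :: "nat \<Rightarrow> nat \<Rightarrow> 'a::{field,finite}"
begin

definition GU :: "nat set \<Rightarrow> (nat \<Rightarrow> 'a) set" where
  "GU A = (\<Union>j\<in>A. Gen m n c L j)"

definition rk :: "nat set \<Rightarrow> nat" where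
  "rk A = fs.dim (GU A)"

abbreviation "K \<equiv> m*n + c + 1"

lemma uv_Zk: "t < K \<Longrightarrow> (uv t :: nat \<Rightarrow> 'a) \<in> Zk K"
  by (auto simp: Zk_def uv_def)

lemma gv_Zk: "k \<le> c \<Longrightarrow> gv m n L k \<in> Zk K"
  by (auto simp: Zk_def gv_def)

lemma Gen_Zk: "Gen m n c L j \<subseteq> Zk K"
proof -
  have "(uv ` blkset n j :: (nat \<Rightarrow> 'a) set) \<subseteq> Zk K" if "j \<in> {1..m}"
  proof
    fix v :: "nat \<Rightarrow> 'a" assume "v \<in> uv ` blkset n j"
    then obtain s where s: "s \<in> {1..n}" "v = uv ((j-1)*n+s)" unfolding blkset_def by blast
    have "(j-1)*n+s \<in> {1..m*n}" by (rule blk_range[OF that s(1)])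
    then have "(j-1)*n+s < K" by simp
    then show "v \<in> Zk K" using s(2) uv_Zk by simp
  qed
  moreover have "(uv (m*n + (j - m)) :: nat \<Rightarrow> 'a) \<in> Zk K" if "j \<in> {m+1..m+c}" using that by (intro uv_Zk) auto
  moreover have "gv m n L (j - m - c) \<in> Zk K" if "j \<in> {m+c+1..m+2*c}" using that by (intro gv_Zk) auto
  ultimately show ?thesis unfolding Gen_def by auto
qed

lemma GU_Zk: "GU A \<subseteq> Zk K"
  unfolding GU_def by (intro UN_least Gen_Zk)

lemma fin_sub_Zk: "(X :: (nat \<Rightarrow> 'a) set) \<subseteq> Zk K \<Longrightarrow> finite X"
  by (rule finite_subset[OF _ finite_Zk])

lemma fin_GU: "finite (GU A)"
  by (rule fin_sub_Zk[OF GU_Zk])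

lemma GU_Un: "GU (A \<union> B) = GU A \<union> GU B"
  by (simp add: GU_def)

lemma GU_single: "GU {j} = Gen m n c L j"
  by (simp add: GU_def)

lemma rk_axioms: "rkf N rk"
proof
  show "rk {} = 0" by (simp add: rk_def GU_def dim_empty)
next
  fix A B :: "nat set" assume "A \<subseteq> B"
  then have "GU A \<subseteq> GU B" by (auto simp: GU_def)
  then have "GU A \<subseteq> fs.span (GU B)" using fs.span_superset by blast
  then show "rk A \<le> rk B" unfolding rk_def by (rule dim_mono_fin[OF fin_GU])
next
  fix A B :: "nat set"
  have s: "fs.dim (GU A \<union> GU B) + fs.dim (fs.span (GU A) \<inter> fs.span (GU B)) \<le> fs.dim (GU A) + fs.dim (GU B)"
    by (rule submod_dim[OF fin_GU fin_GU])
  have "fs.span (GU A) \<inter> fs.span (GU B) \<subseteq> Zk K" using span_Zk[OF GU_Zk] by blast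
  then have fW: "finite (fs.span (GU A) \<inter> fs.span (GU B))" by (rule fin_sub_Zk)
  have "GU (A \<inter> B) \<subseteq> fs.span (GU A) \<inter> fs.span (GU B)"
    unfolding GU_def using fs.span_superset by blast
  then have "GU (A \<inter> B) \<subseteq> fs.span (fs.span (GU A) \<inter> fs.span (GU B))"
    using fs.span_superset by blast
  then have "fs.dim (GU (A \<inter> B)) \<le> fs.dim (fs.span (GU A) \<inter> fs.span (GU B))"
    by (rule dim_mono_fin[OF fW])
  with s show "rk (A \<union> B) + rk (A \<inter> B) \<le> rk A + rk B" unfolding rk_def GU_Un by linarith
qed

sublocale R: rkf "m + 2*c" rk by (rule rk_axioms)

lemma GU_msgs: "GU {1..m} = uv ` {1..m*n}"
proof -
  have "GU {1..m} = (\<Union>j\<in>{1..m}. uv ` blkset n j)" by (simp add: GU_def Gen_def)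
  also have "\<dots> = uv ` (\<Union>j\<in>{1..m}. blkset n j)" by blast
  finally show ?thesis using blk_union[where m=m and n=n] by simp
qed

lemma GU_err: "GU {m+1..m+c} = uv ` {m*n+1..m*n+c}"
proof -
  have "GU {m+1..m+c} = (\<Union>j\<in>{m+1..m+c}. {uv (m*n + (j - m))})" by (simp add: GU_def Gen_def)
  also have "\<dots> = uv ` ((\<lambda>j. m*n + (j - m)) ` {m+1..m+c})" by blast
  also have "(\<lambda>j. m*n + (j - m)) ` {m+1..m+c} = {m*n+1..m*n+c}"
  proof
    show "(\<lambda>j. m*n + (j - m)) ` {m+1..m+c} \<subseteq> {m*n+1..m*n+c}" by auto
    show "{m*n+1..m*n+c} \<subseteq> (\<lambda>j. m*n + (j - m)) ` {m+1..m+c}"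
    proof
      fix t assume t: "t \<in> {m*n+1..m*n+c}"
      then have "t = m*n + ((m + (t - m*n)) - m)" "m + (t - m*n) \<in> {m+1..m+c}" by auto
      then show "t \<in> (\<lambda>j. m*n + (j - m)) ` {m+1..m+c}" by blast
    qed
  qed
  finally show ?thesis .
qed

lemma GU_rec: "GU {m+c+1..m+2*c} = gv m n L ` {1..c}"
proof -
  have "GU {m+c+1..m+2*c} = (\<Union>j\<in>{m+c+1..m+2*c}. {gv m n L (j - m - c)})" by (simp add: GU_def Gen_def)
  also have "\<dots> = gv m n L ` ((\<lambda>j. j - m - c) ` {m+c+1..m+2*c})" by blast
  also have "(\<lambda>j. j - m - c) ` {m+c+1..m+2*c} = {1..c}"
  proof
    show "(\<lambda>j. j - m - c) ` {m+c+1..m+2*c} \<subseteq> {1..c}" by auto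
    show "{1..c} \<subseteq> (\<lambda>j. j - m - c) ` {m+c+1..m+2*c}"
    proof
      fix k assume k: "k \<in> {1..c}"
      then have "k = (m + c + k) - m - c" "m + c + k \<in> {m+c+1..m+2*c}" by auto
      then show "k \<in> (\<lambda>j. j - m - c) ` {m+c+1..m+2*c}" by blast
    qed
  qed
  finally show ?thesis .
qed

lemma Gen_err: "k \<in> {1..c} \<Longrightarrow> Gen m n c L (m + k) = {uv (m*n + k)}"
  by (simp add: Gen_def)

lemma Gen_rec: "k \<in> {1..c} \<Longrightarrow> Gen m n c L (m + c + k) = {gv m n L k}"
  by (simp add: Gen_def)

lemma gv_in_span: "k \<ge> 1 \<Longrightarrow> gv m n L k \<in> fs.span (uv ` {1..m*n} \<union> {uv (m*n+k)})"
proof -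
  assume k: "k \<ge> 1"
  have "(\<Sum>t\<in>{1..m*n}. fscale (L t k) (uv t)) \<in> fs.span (uv ` {1..m*n} \<union> {uv (m*n+k)})"
    by (intro fs.span_sum fs.span_scale fs.span_base) auto
  moreover have "uv (m*n+k) \<in> fs.span (uv ` {1..m*n} \<union> {uv (m*n+k)})" by (intro fs.span_base) auto
  ultimately show ?thesis unfolding gv_decomp[OF k] by (rule fs.span_add)
qed

lemma uv_in_span: "k \<ge> 1 \<Longrightarrow> uv (m*n+k) \<in> fs.span (uv ` {1..m*n} \<union> {gv m n L k})"
proof -
  assume k: "k \<ge> 1"
  have e: "uv (m*n+k) = gv m n L k - (\<Sum>t\<in>{1..m*n}. fscale (L t k) (uv t))"
    unfolding gv_decomp[OF k] by simp
  have "(\<Sum>t\<in>{1..m*n}. fscale (L t k) (uv t)) \<in> fs.span (uv ` {1..m*n} \<union> {gv m n L k})"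
    by (intro fs.span_sum fs.span_scale fs.span_base) auto
  moreover have "gv m n L k \<in> fs.span (uv ` {1..m*n} \<union> {gv m n L k})" by (intro fs.span_base) auto
  ultimately show ?thesis unfolding e by (intro fs.span_diff)
qed

end

context fwd begin

lemma card_blkset: "card (blkset n j) = n"
proof -
  have "inj_on (\<lambda>s. (j-1)*n+s) {1..n}" by (rule inj_onI) simp
  then show ?thesis unfolding blkset_def by (simp add: card_image)
qed

lemma rk_msg1: "j \<in> {1..m} \<Longrightarrow> rk {j} = n"
  unfolding rk_def GU_single Gen_def
  by (simp add: dim_uv card_blkset blkset_def)

lemma GU_mc: "GU {1..m+c} = uv ` {1..m*n+c}"
proof -
  have "{1..m+c} = {1..m} \<union> {m+1..m+c}" by auto
  then have "GU {1..m+c} = GU {1..m} \<union> GU {m+1..m+c}" by (simp only: GU_Un)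
  also have "\<dots> = uv ` {1..m*n} \<union> uv ` {m*n+1..m*n+c}" unfolding GU_msgs GU_err ..
  also have "\<dots> = uv ` ({1..m*n} \<union> {m*n+1..m*n+c})" by blast
  also have "{1..m*n} \<union> {m*n+1..m*n+c} = {1..m*n+c}" by auto
  finally show ?thesis .
qed

lemma rk_mc: "rk {1..m+c} = m*n+c"
  unfolding rk_def GU_mc by (simp add: dim_uv)

lemma rk_single: "j \<in> {1..2*c} \<Longrightarrow> rk {m+j} = 1"
proof -
  assume j: "j \<in> {1..2*c}"
  show ?thesis
  proof (cases "j \<le> c")
    case True
    then have "Gen m n c L (m+j) = {uv (m*n+j)}" using j by (intro Gen_err) auto
    then show ?thesis unfolding rk_def GU_single by (simp add: dim_single uv_nz)
  next
    case False
    then have e: "m + j = m + c + (j - c)" by simp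
    have "Gen m n c L (m+c+(j-c)) = {gv m n L (j-c)}" using j False by (intro Gen_rec) auto
    moreover have "gv m n L (j-c) \<noteq> 0" using False by (intro gv_nz) auto
    ultimately show ?thesis unfolding rk_def GU_single e by (simp add: dim_single)
  qed
qed

lemma rk_all: "rk {1..m+2*c} = m*n+c"
proof -
  have "{1..m+2*c} = {1..m+c} \<union> {m+c+1..m+2*c}" by auto
  then have "GU {1..m+2*c} = GU {1..m+c} \<union> GU {m+c+1..m+2*c}" by (simp only: GU_Un)
  then have G: "GU {1..m+2*c} = uv ` {1..m*n+c} \<union> gv m n L ` {1..c}" unfolding GU_mc GU_rec .
  have sub: "gv m n L ` {1..c} \<subseteq> fs.span (uv ` {1..m*n+c})"
  proof
    fix v assume "v \<in> gv m n L ` {1..c}"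
    then obtain k where k: "k \<in> {1..c}" "v = gv m n L k" by blast
    have "uv ` {1..m*n} \<union> {uv (m*n+k)} \<subseteq> uv ` {1..m*n+c}" using k by auto
    then have "fs.span (uv ` {1..m*n} \<union> {uv (m*n+k)}) \<subseteq> fs.span (uv ` {1..m*n+c})" by (rule fs.span_mono)
    then show "v \<in> fs.span (uv ` {1..m*n+c})" using gv_in_span[of k] k by auto
  qed
  have "fs.dim (uv ` {1..m*n+c} \<union> gv m n L ` {1..c}) = fs.dim (uv ` {1..m*n+c} :: (nat \<Rightarrow> 'a) set)"
    by (rule absorb[OF _ sub]) simp
  then show ?thesis unfolding rk_def G by (simp add: dim_uv)
qed

lemma rk_B:
  assumes k: "k \<in> {1..c}"
  shows "rk ({1..m} \<union> {m + k, m + c + k}) = rk ({1..m} \<union> {m + k})"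
    "rk ({1..m} \<union> {m + k}) = rk ({1..m} \<union> {m + c + k})"
proof -
  let ?U = "uv ` {1..m*n} :: (nat \<Rightarrow> 'a) set"
  have "GU {m + k, m + c + k} = Gen m n c L (m+k) \<union> Gen m n c L (m+c+k)" by (simp add: GU_def)
  also have "\<dots> = {uv (m*n+k)} \<union> {gv m n L k}" using k by (simp only: Gen_err Gen_rec)
  finally have "GU {m + k, m + c + k} = {uv (m*n+k)} \<union> {gv m n L k}" .
  then have g1: "GU ({1..m} \<union> {m + k, m + c + k}) = (?U \<union> {uv (m*n+k)}) \<union> {gv m n L k}"
    unfolding GU_Un GU_msgs by blast
  have g2: "GU ({1..m} \<union> {m + k}) = ?U \<union> {uv (m*n+k)}"
    unfolding GU_Un GU_msgs GU_single Gen_err[OF k] ..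
  have g3: "GU ({1..m} \<union> {m + c + k}) = ?U \<union> {gv m n L k}"
    unfolding GU_Un GU_msgs GU_single Gen_rec[OF k] ..
  have k1: "k \<ge> 1" using k by simp
  have a1: "fs.dim ((?U \<union> {uv (m*n+k)}) \<union> {gv m n L k}) = fs.dim (?U \<union> {uv (m*n+k)})"
    by (rule absorb) (use gv_in_span[OF k1] in auto)
  have a2: "fs.dim ((?U \<union> {gv m n L k}) \<union> {uv (m*n+k)}) = fs.dim (?U \<union> {gv m n L k})"
    by (rule absorb) (use uv_in_span[OF k1] in auto)
  have e: "(?U \<union> {uv (m*n+k)}) \<union> {gv m n L k} = (?U \<union> {gv m n L k}) \<union> {uv (m*n+k)}" by blast
  show "rk ({1..m} \<union> {m + k, m + c + k}) = rk ({1..m} \<union> {m + k})"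
    unfolding rk_def g1 g2 a1 ..
  show "rk ({1..m} \<union> {m + k}) = rk ({1..m} \<union> {m + c + k})"
    unfolding rk_def g2 g3 using a1 a2 e by simp
qed

end

context fwd begin

lemma rk_C:
  assumes g: "good m n c L fi Hi d" and fi: "fi \<in> {1..m}" and Hi: "Hi \<subseteq> {1..m} - {fi}"
    and F: "F \<subseteq> {1..c}" "card F = 2*d"
  shows "rk (({fi} \<union> {m + c + 1..m + 2*c}) \<union> ({1..m + c} - (({1..m} - Hi) \<union> (\<lambda>k. m + k) ` F)))
       = rk ({m + c + 1..m + 2*c} \<union> ({1..m + c} - (({1..m} - Hi) \<union> (\<lambda>k. m + k) ` F)))"
proof -
  define T where "T = {1..m + c} - (({1..m} - Hi) \<union> (\<lambda>k. m + k) ` F)"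
  define S where "S = {m + c + 1..m + 2*c}"
  define U where "U = GU (S \<union> T)"
  have GUsub: "A \<subseteq> B \<Longrightarrow> GU A \<subseteq> GU B" for A B by (auto simp: GU_def)
  have hH: "Gen m n c L j \<subseteq> U" if j: "j \<in> Hi" for j
  proof -
    have "j \<in> T" using j Hi F(1) by (force simp: T_def)
    then have "{j} \<subseteq> S \<union> T" by blast
    from GUsub[OF this] show ?thesis unfolding U_def GU_single .
  qed
  have hE: "uv (m*n+k) \<in> U" if k: "k \<in> {1..c}" "k \<notin> F" for k
  proof -
    have "m + k \<in> T" using k by (auto simp: T_def)
    then have "{m+k} \<subseteq> S \<union> T" by blast
    from GUsub[OF this] show ?thesis unfolding U_def GU_single Gen_err[OF k(1)] by blast
  qed
  have hR: "gv m n L k \<in> U" if k: "k \<in> {1..c}" for k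
  proof -
    have "m + c + k \<in> S" using k by (auto simp: S_def)
    then have "{m+c+k} \<subseteq> S \<union> T" by blast
    from GUsub[OF this] show ?thesis unfolding U_def GU_single Gen_rec[OF k] by blast
  qed
  have fU: "finite U" unfolding U_def by (rule fin_GU)
  have sub: "Gen m n c L fi \<subseteq> fs.span U"
  proof
    fix v assume "v \<in> Gen m n c L fi"
    moreover have "Gen m n c L fi = uv ` blkset n fi" using fi by (simp add: Gen_def)
    ultimately have "v \<in> uv ` ((\<lambda>s. (fi-1)*n+s) ` {1..n})" unfolding blkset_def by simp
    then obtain s where s: "s \<in> {1..n}" "v = uv ((fi-1)*n+s)" by blast
    show "v \<in> fs.span U"
    proof (rule ccontr)
      assume nv: "v \<notin> fs.span U"
      obtain \<phi> where \<phi>: "Vector_Spaces.linear fscale ((*) :: 'a \<Rightarrow> _) \<phi>" "\<forall>u\<in>fs.span U. \<phi> u = 0" "\<phi> v = 1"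
        using separate[OF fU nv] by blast
      have \<phi>U: "\<phi> u = 0" if "u \<in> U" for u using \<phi>(2) fs.span_base[OF that] by blast
      define z where "z j t = (if j \<in> {1..m} \<and> t \<in> {1..n} then \<phi> (uv ((j-1)*n+t)) else 0)" for j t
      have zm: "z \<in> msgs m n" by (auto simp: z_def msgs_def fvec_def)
      have zH: "\<forall>j\<in>Hi. z j = (\<lambda>_. 0)"
      proof (intro ballI ext)
        fix j t assume j: "j \<in> Hi"
        show "z j t = 0"
        proof (cases "j \<in> {1..m} \<and> t \<in> {1..n}")
          case True
          then have "uv ((j-1)*n+t) \<in> Gen m n c L j" unfolding Gen_def blkset_def by auto
          then have "uv ((j-1)*n+t) \<in> U" using hH[OF j] by blast
          then show ?thesis using True \<phi>U by (simp add: z_def)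
        next
          case False then show ?thesis unfolding z_def by (simp only: if_False)
        qed
      qed
      have Cz: "lin_encode m n c L z k = \<phi> (gv m n L k) - \<phi> (uv (m*n+k))" if k: "k \<in> {1..c}" for k
      proof -
        have "lin_encode m n c L z k = (\<Sum>r\<in>{1..m*n}. z (bi n r) (po n r) * L r k)"
          using k by (simp add: lin_encode_def bi_def po_def)
        also have "\<dots> = (\<Sum>r\<in>{1..m*n}. \<phi> (fscale (L r k) (uv r)))"
        proof (rule sum.cong)
          fix r assume r: "r \<in> {1..m*n}"
          have "z (bi n r) (po n r) = \<phi> (uv r)" using blk_b[OF r] by (simp add: z_def)
          then show "z (bi n r) (po n r) * L r k = \<phi> (fscale (L r k) (uv r))"
            by (simp add: lin_facts(3)[OF \<phi>(1)])
        qed simp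
        also have "\<dots> = \<phi> (\<Sum>r\<in>{1..m*n}. fscale (L r k) (uv r))" by (simp add: lin_facts(4)[OF \<phi>(1)])
        also have "(\<Sum>r\<in>{1..m*n}. fscale (L r k) (uv r)) = gv m n L k - uv (m*n+k)"
          using gv_decomp[of k m n L] k by simp
        finally show ?thesis by (simp only: lin_facts(5)[OF \<phi>(1)])
      qed
      have "{k. lin_encode m n c L z k \<noteq> 0} \<subseteq> F"
      proof
        fix k assume nz: "k \<in> {k. lin_encode m n c L z k \<noteq> 0}"
        have kc: "k \<in> {1..c}"
        proof (rule ccontr)
          assume "k \<notin> {1..c}" then have "lin_encode m n c L z k = 0" unfolding lin_encode_def by auto
          with nz show False by simp
        qed
        show "k \<in> F"
        proof (rule ccontr)
          assume "k \<notin> F"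
          then have "lin_encode m n c L z k = 0" using Cz[OF kc] \<phi>U hR[OF kc] hE[OF kc] by simp
          with nz show False by simp
        qed
      qed
      then have "card {k. lin_encode m n c L z k \<noteq> 0} \<le> 2 * d"
        using F card_mono[OF finite_subset[OF F(1)]] by fastforce
      then have "z fi = (\<lambda>_. 0)" using g zm zH unfolding good_def by blast
      then have "z fi s = 0" by simp
      moreover have "z fi s = 1" using fi s \<phi>(3) by (simp add: z_def)
      ultimately show False by simp
    qed
  qed
  have "GU (({fi} \<union> S) \<union> T) = U \<union> Gen m n c L fi" unfolding U_def GU_Un GU_single by blast
  moreover have "finite (U \<union> Gen m n c L fi)" using fU fin_GU[of "{fi}"] unfolding GU_single by simp
  ultimately have "rk (({fi} \<union> S) \<union> T) = fs.dim U" unfolding rk_def using absorb[OF _ sub] by simp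
  then show ?thesis unfolding rk_def U_def S_def T_def .
qed

end

definition RHS :: "nat \<Rightarrow> nat \<Rightarrow> nat \<Rightarrow> 'r set \<Rightarrow> ('r \<Rightarrow> nat) \<Rightarrow> ('r \<Rightarrow> nat set) \<Rightarrow> ('r \<Rightarrow> nat)
    \<Rightarrow> 'a::field itself \<Rightarrow> bool" where
  "RHS m n c I f H \<delta> TT \<longleftrightarrow>
    (\<exists>D. discrete_polymatroid (m + 2*c) D \<and> pm_representable (m + 2*c) D TT \<and>
       pm_rank D {1..m + 2*c} = m*n + c \<and>
       (\<forall>j\<in>{1..m}. pm_rank D {j} = n) \<and>
       pm_rank D {1..m + c} = m*n + c \<and>
       (\<forall>j\<in>{1..2*c}. pm_rank D {m + j} = 1) \<and>
       (\<forall>j\<in>{1..c}.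
          pm_rank D ({1..m} \<union> {m + j, m + c + j}) = pm_rank D ({1..m} \<union> {m + j}) \<and>
          pm_rank D ({1..m} \<union> {m + j}) = pm_rank D ({1..m} \<union> {m + c + j})) \<and>
       (\<forall>i\<in>I. \<forall>F. F \<subseteq> {1..c} \<and> card F = 2 * \<delta> i \<longrightarrow>
          (let T = {1..m + c} - (({1..m} - H i) \<union> (\<lambda>k. m + k) ` F);
               S = {m + c + 1..m + 2*c}
           in contr_rank (pm_rank D) T ({f i} \<union> S) = contr_rank (pm_rank D) T S)))"

context fwd begin

lemma rep: "pm_representable (m + 2*c) (pmD (m + 2*c) rk) TYPE('a)"
  unfolding pm_representable_def
proof (intro exI conjI ballI allI impI)
  fix j
  show "fs.subspace (fs.span (Gen m n c L j))" by (rule fs.subspace_span)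
  show "fs.span (Gen m n c L j) \<subseteq> {v. \<forall>t\<ge>K. v t = 0}"
    using span_Zk[OF Gen_Zk[of j]] by (simp add: Zk_def)
next
  fix A assume A: "A \<subseteq> {1..m + 2*c}"
  have "fs.dim (fs.span (\<Union>j\<in>A. fs.span (Gen m n c L j))) = fs.dim (fs.span (GU A))"
    unfolding GU_def span_UN_span ..
  also have "\<dots> = rk A" by (simp add: rk_def fs.dim_span)
  also have "\<dots> = pm_rank (pmD (m + 2*c) rk) A" by (rule R.pm_rank_eq[OF A, symmetric])
  finally show "fs.dim (fs.span (\<Union>j\<in>A. fs.span (Gen m n c L j))) = pm_rank (pmD (m + 2*c) rk) A" .
qed

lemma fwd_main:
  assumes hf: "\<forall>i\<in>I. f i \<in> {1..m}" and hH: "\<forall>i\<in>I. H i \<subseteq> {1..m} - {f i}"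
    and hg: "\<forall>i\<in>I. good m n c L (f i) (H i) (\<delta> i)"
  shows "RHS m n c I f H \<delta> TYPE('a)"
  unfolding RHS_def
proof (intro exI conjI ballI allI impI)
  let ?D = "pmD (m + 2*c) rk"
  have pr: "pm_rank ?D A = rk A" if "A \<subseteq> {1..m + 2*c}" for A by (rule R.pm_rank_eq[OF that])
  show "discrete_polymatroid (m + 2*c) ?D" by (rule R.is_pm)
  show "pm_representable (m + 2*c) ?D TYPE('a)" by (rule rep)
  show "pm_rank ?D {1..m + 2*c} = m*n + c" using pr[of "{1..m + 2*c}"] rk_all by simp
  show "pm_rank ?D {1..m + c} = m*n + c" using pr[of "{1..m + c}"] rk_mc by simp
  show "pm_rank ?D {j} = n" if "j \<in> {1..m}" for j using pr[of "{j}"] rk_msg1[OF that] that by simp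
  show "pm_rank ?D {m + j} = 1" if "j \<in> {1..2*c}" for j using pr[of "{m+j}"] rk_single[OF that] that by simp
  show "pm_rank ?D ({1..m} \<union> {m + j, m + c + j}) = pm_rank ?D ({1..m} \<union> {m + j})" if "j \<in> {1..c}" for j
    using pr[of "{1..m} \<union> {m + j, m + c + j}"] pr[of "{1..m} \<union> {m + j}"] rk_B(1)[OF that] that by simp
  show "pm_rank ?D ({1..m} \<union> {m + j}) = pm_rank ?D ({1..m} \<union> {m + c + j})" if "j \<in> {1..c}" for j
    using pr[of "{1..m} \<union> {m + c + j}"] pr[of "{1..m} \<union> {m + j}"] rk_B(2)[OF that] that by simp
next
  fix i F assume i: "i \<in> I" and F: "F \<subseteq> {1..c} \<and> card F = 2 * \<delta> i"
  let ?D = "pmD (m + 2*c) rk"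
  have pr: "pm_rank ?D A = rk A" if "A \<subseteq> {1..m + 2*c}" for A by (rule R.pm_rank_eq[OF that])
  define T where "T = {1..m + c} - (({1..m} - H i) \<union> (\<lambda>k. m + k) ` F)"
  define S where "S = {m + c + 1..m + 2*c}"
  have Ts: "T \<subseteq> {1..m + 2*c}" by (auto simp: T_def)
  have Ss: "S \<subseteq> {1..m + 2*c}" by (auto simp: S_def)
  have fs: "f i \<in> {1..m + 2*c}" using hf i by auto
  have e: "rk (({f i} \<union> S) \<union> T) = rk (S \<union> T)"
    unfolding S_def T_def by (rule rk_C) (use hg hf hH i F in auto)
  have "contr_rank (pm_rank ?D) T ({f i} \<union> S) = contr_rank (pm_rank ?D) T S"
    unfolding contr_rank_def using pr[of "({f i} \<union> S) \<union> T"] pr[of "S \<union> T"] Ts Ss fs e by simp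
  then show "let T = {1..m + c} - (({1..m} - H i) \<union> (\<lambda>k. m + k) ` F); S = {m + c + 1..m + 2*c}
           in contr_rank (pm_rank ?D) T ({f i} \<union> S) = contr_rank (pm_rank ?D) T S"
    unfolding Let_def T_def S_def .
qed

end

lemma forward:
  assumes hf: "\<forall>i\<in>I. f i \<in> {1..m}" and hH: "\<forall>i\<in>I. H i \<subseteq> {1..m} - {f i}"
    and code: "is_vl_diff_ecic m n c I f H \<delta> TYPE('a::{field,finite})"
  shows "RHS m n c I f H \<delta> TYPE('a)"
proof -
  obtain L :: "nat \<Rightarrow> nat \<Rightarrow> 'a" where L: "is_diff_ecic m n c I f H \<delta> (lin_encode m n c L)"
    using code unfolding is_vl_diff_ecic_def by blast
  interpret fwd m n c L .
  have "\<forall>i\<in>I. good m n c L (f i) (H i) (\<delta> i)"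
  proof
    fix i assume i: "i \<in> I"
    show "good m n c L (f i) (H i) (\<delta> i)"
      by (rule good_of_decoder) (use L i in \<open>simp add: is_diff_ecic_def\<close>)
  qed
  then show ?thesis by (rule fwd_main[OF hf hH])
qed


locale bwd =
  fixes m n c K :: nat and V :: "nat \<Rightarrow> (nat \<Rightarrow> 'a::{field,finite}) set" and D :: "(nat \<Rightarrow> nat) set"
  assumes Vsub: "\<forall>j\<in>{1..m + 2*c}. fs.subspace (V j) \<and> V j \<subseteq> {v. \<forall>t\<ge>K. v t = 0}"
    and Vdim: "\<forall>A\<subseteq>{1..m + 2*c}. fs.dim (fs.span (\<Union>j\<in>A. V j)) = pm_rank D A"
    and r1: "\<forall>j\<in>{1..m}. pm_rank D {j} = n"
    and r2: "pm_rank D {1..m + c} = m*n + c"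
    and r3: "\<forall>j\<in>{1..2*c}. pm_rank D {m + j} = 1"
    and r4: "\<forall>j\<in>{1..c}.
          pm_rank D ({1..m} \<union> {m + j, m + c + j}) = pm_rank D ({1..m} \<union> {m + j}) \<and>
          pm_rank D ({1..m} \<union> {m + j}) = pm_rank D ({1..m} \<union> {m + c + j})"
begin

definition UV :: "nat set \<Rightarrow> (nat \<Rightarrow> 'a) set" where "UV A = (\<Union>j\<in>A. V j)"
definition rr :: "nat set \<Rightarrow> nat" where "rr A = fs.dim (UV A)"

lemma V_Zk: "j \<in> {1..m + 2*c} \<Longrightarrow> V j \<subseteq> Zk K"
  using Vsub by (auto simp: Zk_def)

lemma fin_Zk: "(X :: (nat \<Rightarrow> 'a) set) \<subseteq> Zk K \<Longrightarrow> finite X"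
  by (rule finite_subset[OF _ finite_Zk])

lemma UV_Zk: "A \<subseteq> {1..m + 2*c} \<Longrightarrow> UV A \<subseteq> Zk K"
  unfolding UV_def using V_Zk by blast

lemma fin_UV: "A \<subseteq> {1..m + 2*c} \<Longrightarrow> finite (UV A)"
  by (rule fin_Zk[OF UV_Zk])

lemma fin_V: "j \<in> {1..m + 2*c} \<Longrightarrow> finite (V j)"
  by (rule fin_Zk[OF V_Zk])

lemma rr_pm: "A \<subseteq> {1..m + 2*c} \<Longrightarrow> rr A = pm_rank D A"
  using Vdim by (simp add: rr_def UV_def fs.dim_span)

lemma UV_single: "UV {j} = V j" by (simp add: UV_def)
lemma UV_Un: "UV (A \<union> B) = UV A \<union> UV B" by (simp add: UV_def)

lemma rr_mono: "A \<subseteq> B \<Longrightarrow> B \<subseteq> {1..m + 2*c} \<Longrightarrow> rr A \<le> rr B"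
proof -
  assume AB: "A \<subseteq> B" and B: "B \<subseteq> {1..m + 2*c}"
  have "UV A \<subseteq> UV B" using AB by (auto simp: UV_def)
  then have "UV A \<subseteq> fs.span (UV B)" using fs.span_superset by blast
  then show ?thesis unfolding rr_def by (rule dim_mono_fin[OF fin_UV[OF B]])
qed

lemma dimV: "j \<in> {1..m + 2*c} \<Longrightarrow> fs.dim (V j) = pm_rank D {j}"
  using rr_pm[of "{j}"] by (simp add: rr_def UV_single)

lemma ex_basis:
  assumes j: "j \<in> {1..m + 2*c}"
  shows "\<exists>B. finite B \<and> B \<subseteq> V j \<and> V j \<subseteq> fs.span B \<and> card B = pm_rank D {j}"
proof -
  obtain B where B: "B \<subseteq> V j" "fs.independent B" "V j \<subseteq> fs.span B" "card B = fs.dim (V j)"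
    using fs.basis_exists by blast
  have "finite B" using B(1) fin_V[OF j] finite_subset by blast
  with B dimV[OF j] show ?thesis by auto
qed

lemma ex_W: "j \<in> {1..m} \<Longrightarrow> \<exists>w. w ` {1..n} \<subseteq> V j \<and> V j \<subseteq> fs.span (w ` {1..n})"
proof -
  assume j: "j \<in> {1..m}"
  then have j': "j \<in> {1..m + 2*c}" by auto
  obtain B where B: "finite B" "B \<subseteq> V j" "V j \<subseteq> fs.span B" "card B = n"
    using ex_basis[OF j'] r1 j by auto
  obtain h where h: "bij_betw h {1..card B} B" using ex_bij_betw_nat_finite_1[OF B(1)] by blast
  then have "h ` {1..n} = B" using B(4) by (simp add: bij_betw_def)
  then show ?thesis using B by (intro exI[of _ h]) auto
qed

lemma ex_one: "j \<in> {1..2*c} \<Longrightarrow> \<exists>b. b \<in> V (m+j) \<and> V (m+j) \<subseteq> fs.span {b}"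
proof -
  assume j: "j \<in> {1..2*c}"
  then have j': "m + j \<in> {1..m + 2*c}" by auto
  obtain B where B: "finite B" "B \<subseteq> V (m+j)" "V (m+j) \<subseteq> fs.span B" "card B = 1"
    using ex_basis[OF j'] r3 j by auto
  then obtain b where "B = {b}" by (meson card_1_singletonE)
  then show ?thesis using B by auto
qed

definition W :: "nat \<Rightarrow> nat \<Rightarrow> (nat \<Rightarrow> 'a)" where
  "W j = (SOME w. w ` {1..n} \<subseteq> V j \<and> V j \<subseteq> fs.span (w ` {1..n}))"
definition bv :: "nat \<Rightarrow> (nat \<Rightarrow> 'a)" where
  "bv k = (SOME b. b \<in> V (m+k) \<and> V (m+k) \<subseteq> fs.span {b})"
definition gw :: "nat \<Rightarrow> (nat \<Rightarrow> 'a)" where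
  "gw k = (SOME b. b \<in> V (m+c+k) \<and> V (m+c+k) \<subseteq> fs.span {b})"

lemma W_prop: "j \<in> {1..m} \<Longrightarrow> W j ` {1..n} \<subseteq> V j \<and> V j \<subseteq> fs.span (W j ` {1..n})"
  unfolding W_def by (rule someI_ex[OF ex_W])

lemma bv_prop: "k \<in> {1..c} \<Longrightarrow> bv k \<in> V (m+k) \<and> V (m+k) \<subseteq> fs.span {bv k}"
  unfolding bv_def by (rule someI_ex[OF ex_one]) auto

lemma gw_prop: "k \<in> {1..c} \<Longrightarrow> gw k \<in> V (m+c+k) \<and> V (m+c+k) \<subseteq> fs.span {gw k}"
proof -
  assume k: "k \<in> {1..c}"
  have "\<exists>b. b \<in> V (m+(c+k)) \<and> V (m+(c+k)) \<subseteq> fs.span {b}" using k by (intro ex_one) auto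
  then have "\<exists>b. b \<in> V (m+c+k) \<and> V (m+c+k) \<subseteq> fs.span {b}" by (simp add: add.assoc)
  then show ?thesis unfolding gw_def by (rule someI_ex)
qed

definition w :: "nat \<Rightarrow> (nat \<Rightarrow> 'a)" where "w r = W (bi n r) (po n r)"
definition vec :: "nat \<Rightarrow> (nat \<Rightarrow> 'a)" where "vec r = (if r \<le> m*n then w r else bv (r - m*n))"

abbreviation "Idx \<equiv> {1..m*n+c}"
abbreviation "Vall \<equiv> vec ` Idx"

lemma w_blk: "j \<in> {1..m} \<Longrightarrow> s \<in> {1..n} \<Longrightarrow> w ((j-1)*n+s) = W j s"
  using blk_a[of j s n] by (simp add: w_def)

lemma W_img: "j \<in> {1..m} \<Longrightarrow> W j ` {1..n} = w ` blkset n j"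
proof -
  assume j: "j \<in> {1..m}"
  have "W j ` {1..n} = (\<lambda>s. w ((j-1)*n+s)) ` {1..n}" using w_blk[OF j] by (intro image_cong) auto
  also have "\<dots> = w ` blkset n j" unfolding blkset_def image_image ..
  finally show ?thesis .
qed

end

lemma span_sub_span: "X \<subseteq> fs.span Z \<Longrightarrow> fs.span X \<subseteq> fs.span (Z :: (nat \<Rightarrow> 'a::field) set)"
  using fs.span_mono[of X "fs.span Z"] by (simp add: fs.span_span)

lemma indep_notin: "fs.independent S \<Longrightarrow> a \<in> S \<Longrightarrow> a \<notin> fs.span (S - {a :: nat \<Rightarrow> 'a::field})"
proof -
  assume S: "fs.independent S" and a: "a \<in> S"
  have "insert a (S - {a}) = S" using a by blast
  then have "fs.independent (insert a (S - {a}))" using S by simp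
  then show ?thesis using fs.independent_insert[of a "S - {a}"] by simp
qed

context bwd begin

lemma vec_w: "r \<in> {1..m*n} \<Longrightarrow> vec r = w r" by (simp add: vec_def)
lemma vec_b: "k \<in> {1..c} \<Longrightarrow> vec (m*n+k) = bv k" by (simp add: vec_def)

lemma w_in: "r \<in> {1..m*n} \<Longrightarrow> w r \<in> V (bi n r)"
  using W_prop[OF blk_b(1)] blk_b(2) unfolding w_def by blast

lemma Vall_sub: "Vall \<subseteq> UV {1..m+c}"
proof
  fix v assume "v \<in> Vall"
  then obtain r where r: "r \<in> Idx" "v = vec r" by blast
  show "v \<in> UV {1..m+c}"
  proof (cases "r \<le> m*n")
    case True
    then have r': "r \<in> {1..m*n}" using r by auto
    have "v \<in> V (bi n r)" using w_in[OF r'] r True by (simp add: vec_def)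
    moreover have "bi n r \<in> {1..m+c}" using blk_b(1)[OF r'] by auto
    ultimately show ?thesis unfolding UV_def by blast
  next
    case False
    then have k: "r - m*n \<in> {1..c}" using r by auto
    have "v = bv (r - m*n)" using r False by (simp add: vec_def)
    then have "v \<in> V (m + (r - m*n))" using bv_prop[OF k] by simp
    moreover have "m + (r - m*n) \<in> {1..m+c}" using k by auto
    ultimately show ?thesis unfolding UV_def by blast
  qed
qed

abbreviation "Mw \<equiv> w ` {1..m*n}"

lemma Mw_vec: "Mw = vec ` {1..m*n}"
  using vec_w by (auto simp: image_iff)

lemma Mw_sub: "Mw \<subseteq> Vall"
  unfolding Mw_vec by auto

lemma Vmsg_span: "j \<in> {1..m} \<Longrightarrow> V j \<subseteq> fs.span Mw"
proof -
  assume j: "j \<in> {1..m}"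
  have "V j \<subseteq> fs.span (w ` blkset n j)" using W_prop[OF j] W_img[OF j] by simp
  moreover have "w ` blkset n j \<subseteq> Mw" using blk_union[where m=m and n=n] j by blast
  ultimately show ?thesis using fs.span_mono by blast
qed

lemma UVmsg_span: "UV {1..m} \<subseteq> fs.span Mw"
  unfolding UV_def using Vmsg_span by blast

lemma UV_span_Vall: "UV {1..m+c} \<subseteq> fs.span Vall"
proof
  fix v assume "v \<in> UV {1..m+c}"
  then obtain j where j: "j \<in> {1..m+c}" "v \<in> V j" unfolding UV_def by blast
  show "v \<in> fs.span Vall"
  proof (cases "j \<le> m")
    case True
    then have "v \<in> fs.span Mw" using Vmsg_span j by auto
    then show ?thesis using fs.span_mono[OF Mw_sub] by blast
  next
    case False
    then have k: "j - m \<in> {1..c}" and e: "j = m + (j - m)" using j by auto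
    have "v \<in> fs.span {bv (j - m)}" using bv_prop[OF k] j e by (metis subsetD)
    moreover have "bv (j - m) \<in> Vall" using vec_b[OF k] k by (metis add_le_mono1 atLeastAtMost_iff image_eqI le_add2 order.trans le_add1 add_le_cancel_left)
    ultimately show ?thesis using fs.span_mono[of "{bv (j - m)}" Vall] by blast
  qed
qed

lemma fin_Vall: "finite Vall" by simp

lemma dim_Vall: "fs.dim Vall = m*n + c"
proof -
  have fU: "finite (UV {1..m+c})" by (rule fin_UV) auto
  have "Vall \<subseteq> fs.span (UV {1..m+c})" using Vall_sub fs.span_superset by blast
  then have d1: "fs.dim Vall \<le> fs.dim (UV {1..m+c})" by (rule dim_mono_fin[OF fU])
  have d2: "fs.dim (UV {1..m+c}) \<le> fs.dim Vall" by (rule dim_mono_fin[OF fin_Vall UV_span_Vall])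
  have "fs.dim (UV {1..m+c}) = m*n + c" using rr_pm[of "{1..m+c}"] r2 by (simp add: rr_def)
  with d1 d2 show ?thesis by simp
qed

lemma card_Vall: "card Vall = m*n + c"
proof -
  have "card Vall \<le> m*n + c" using card_image_le[of Idx vec] by simp
  moreover have "fs.dim Vall \<le> card Vall" by (rule dim_le_card_fin[OF fin_Vall])
  ultimately show ?thesis using dim_Vall by simp
qed

lemma inj_vec: "inj_on vec Idx"
  by (rule eq_card_imp_inj_on) (use card_Vall in simp_all)

lemma indep_Vall: "fs.independent Vall"
  by (rule indep_of_dim_card[OF fin_Vall]) (use dim_Vall card_Vall in simp)

lemma inj_w: "inj_on w {1..m*n}"
proof (rule inj_onI)
  fix a b assume a: "a \<in> {1..m*n}" and b: "b \<in> {1..m*n}" and e: "w a = w b"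
  have "vec a = vec b" using e vec_w a b by simp
  moreover have "a \<in> Idx" "b \<in> Idx" using a b by auto
  ultimately show "a = b" using inj_vec by (meson inj_onD)
qed

lemma bv_notin: "k \<in> {1..c} \<Longrightarrow> bv k \<notin> fs.span Mw"
proof -
  assume k: "k \<in> {1..c}"
  have bin: "bv k \<in> Vall" using vec_b[OF k] k by (metis atLeastAtMost_iff image_eqI add_le_cancel_left le_add1 order.trans le_add2 add_le_mono1)
  have "Mw \<subseteq> Vall - {bv k}"
  proof
    fix v assume "v \<in> Mw"
    then obtain r where r: "r \<in> {1..m*n}" "v = vec r" unfolding Mw_vec by blast
    have "r \<noteq> m*n+k" using r k by auto
    moreover have "r \<in> Idx" "m*n+k \<in> Idx" using r k by auto
    ultimately have "vec r \<noteq> vec (m*n+k)" using inj_vec by (meson inj_onD)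
    then show "v \<in> Vall - {bv k}" using r vec_b[OF k] \<open>r \<in> Idx\<close> by auto
  qed
  then have "fs.span Mw \<subseteq> fs.span (Vall - {bv k})" by (rule fs.span_mono)
  then show ?thesis using indep_notin[OF indep_Vall bin] by blast
qed

end

context bwd begin

lemma UV_mono: "A \<subseteq> B \<Longrightarrow> UV A \<subseteq> UV B" by (auto simp: UV_def)

lemma g_in: assumes k: "k \<in> {1..c}" shows "gw k \<in> fs.span (insert (bv k) Mw)"
proof -
  let ?Y = "UV ({1..m} \<union> {m + k, m + c + k})" and ?X = "UV ({1..m} \<union> {m + k})"
  have sY: "{1..m} \<union> {m + k, m + c + k} \<subseteq> {1..m + 2*c}" using k by auto
  have sX: "{1..m} \<union> {m + k} \<subseteq> {1..m + 2*c}" using k by auto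
  have "fs.dim ?X = fs.dim ?Y" using rr_pm[OF sY] rr_pm[OF sX] r4 k by (simp add: rr_def)
  then have Y: "?Y \<subseteq> fs.span ?X" by (intro dim_eq_sub_span fin_UV sY UV_mono) auto
  have "gw k \<in> ?Y" using gw_prop[OF k] unfolding UV_def by blast
  then have g: "gw k \<in> fs.span ?X" using Y by blast
  have "?X \<subseteq> fs.span (insert (bv k) Mw)"
  proof -
    have "fs.span Mw \<subseteq> fs.span (insert (bv k) Mw)" by (rule fs.span_mono) blast
    then have "UV {1..m} \<subseteq> fs.span (insert (bv k) Mw)" using UVmsg_span by blast
    moreover have "fs.span {bv k} \<subseteq> fs.span (insert (bv k) Mw)" by (rule fs.span_mono) blast
    then have "V (m + k) \<subseteq> fs.span (insert (bv k) Mw)" using bv_prop[OF k] by blast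
    ultimately show ?thesis unfolding UV_Un UV_single by blast
  qed
  then have "fs.span ?X \<subseteq> fs.span (insert (bv k) Mw)" by (rule span_sub_span)
  with g show ?thesis by blast
qed

lemma b_in: assumes k: "k \<in> {1..c}" shows "bv k \<in> fs.span (insert (gw k) Mw)"
proof -
  let ?Y = "UV ({1..m} \<union> {m + k, m + c + k})" and ?X = "UV ({1..m} \<union> {m + c + k})"
  have sY: "{1..m} \<union> {m + k, m + c + k} \<subseteq> {1..m + 2*c}" using k by auto
  have sX: "{1..m} \<union> {m + c + k} \<subseteq> {1..m + 2*c}" using k by auto
  have "fs.dim ?X = fs.dim ?Y" using rr_pm[OF sY] rr_pm[OF sX] r4 k by (simp add: rr_def)
  then have Y: "?Y \<subseteq> fs.span ?X" by (intro dim_eq_sub_span fin_UV sY UV_mono) auto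
  have "bv k \<in> ?Y" using bv_prop[OF k] unfolding UV_def by blast
  then have g: "bv k \<in> fs.span ?X" using Y by blast
  have "?X \<subseteq> fs.span (insert (gw k) Mw)"
  proof -
    have "fs.span Mw \<subseteq> fs.span (insert (gw k) Mw)" by (rule fs.span_mono) blast
    then have "UV {1..m} \<subseteq> fs.span (insert (gw k) Mw)" using UVmsg_span by blast
    moreover have "fs.span {gw k} \<subseteq> fs.span (insert (gw k) Mw)" by (rule fs.span_mono) blast
    then have "V (m + c + k) \<subseteq> fs.span (insert (gw k) Mw)" using gw_prop[OF k] by blast
    ultimately show ?thesis unfolding UV_Un UV_single by blast
  qed
  then have "fs.span ?X \<subseteq> fs.span (insert (gw k) Mw)" by (rule span_sub_span)
  with g show ?thesis by blast
qed

lemma g_decomp: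
  assumes k: "k \<in> {1..c}"
  shows "\<exists>\<beta> \<alpha>. \<beta> \<noteq> 0 \<and> gw k = fscale \<beta> (bv k) + (\<Sum>r\<in>{1..m*n}. fscale (\<alpha> r) (w r))"
proof -
  obtain \<beta> where b: "gw k - fscale \<beta> (bv k) \<in> fs.span Mw"
    using g_in[OF k] fs.span_breakdown_eq by blast
  then obtain u where u: "gw k - fscale \<beta> (bv k) = (\<Sum>v\<in>Mw. fscale (u v) v)"
    using fs.span_finite[of Mw] by auto
  also have "\<dots> = (\<Sum>r\<in>{1..m*n}. fscale (u (w r)) (w r))" by (rule sum.reindex[OF inj_w, unfolded comp_def])
  finally have e: "gw k = fscale \<beta> (bv k) + (\<Sum>r\<in>{1..m*n}. fscale (u (w r)) (w r))"
    by (simp add: diff_eq_eq add.commute)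
  have "\<beta> \<noteq> 0"
  proof
    assume "\<beta> = 0"
    then have "gw k \<in> fs.span Mw" using b by simp
    then have "insert (gw k) Mw \<subseteq> fs.span Mw" using fs.span_superset by blast
    then have "fs.span (insert (gw k) Mw) \<subseteq> fs.span Mw" by (rule span_sub_span)
    then show False using b_in[OF k] bv_notin[OF k] by blast
  qed
  then show ?thesis using e by (intro exI[where x=\<beta>] exI[where x="\<lambda>r. u (w r)"] conjI) simp_all
qed

end

context bwd begin

definition BA :: "nat \<Rightarrow> 'a \<times> (nat \<Rightarrow> 'a)" where
  "BA k = (SOME p. fst p \<noteq> 0 \<and> gw k = fscale (fst p) (bv k) + (\<Sum>r\<in>{1..m*n}. fscale (snd p r) (w r)))"

lemma BA_prop:
  assumes k: "k \<in> {1..c}"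
  shows "fst (BA k) \<noteq> 0 \<and> gw k = fscale (fst (BA k)) (bv k) + (\<Sum>r\<in>{1..m*n}. fscale (snd (BA k) r) (w r))"
proof -
  obtain \<beta> \<alpha> where "\<beta> \<noteq> 0 \<and> gw k = fscale \<beta> (bv k) + (\<Sum>r\<in>{1..m*n}. fscale (\<alpha> r) (w r))"
    using g_decomp[OF k] by blast
  then have "\<exists>p. fst p \<noteq> 0 \<and> gw k = fscale (fst p) (bv k) + (\<Sum>r\<in>{1..m*n}. fscale (snd p r) (w r))"
    by (intro exI[where x="(\<beta>, \<alpha>)"]) simp
  then show ?thesis unfolding BA_def by (rule someI_ex)
qed

definition LL :: "nat \<Rightarrow> nat \<Rightarrow> 'a" where
  "LL r k = snd (BA k) r / fst (BA k)"

lemma good_i: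
  assumes fi: "fi \<in> {1..m}" and Hi: "Hi \<subseteq> {1..m} - {fi}" and d: "2 * d \<le> c"
    and cond: "\<forall>F. F \<subseteq> {1..c} \<and> card F = 2 * d \<longrightarrow>
          (let T = {1..m + c} - (({1..m} - Hi) \<union> (\<lambda>k. m + k) ` F);
               S = {m + c + 1..m + 2*c}
           in contr_rank (pm_rank D) T ({fi} \<union> S) = contr_rank (pm_rank D) T S)"
  shows "good m n c LL fi Hi d"
  unfolding good_def
proof (intro ballI impI)
  let ?C = "lin_encode m n c LL"
  fix z assume zm: "z \<in> msgs m n" and zH: "\<forall>j\<in>Hi. z j = (\<lambda>_. 0)"
    and cP: "card {k. ?C z k \<noteq> 0} \<le> 2 * d"
  define P where "P = {k. ?C z k \<noteq> 0}"
  have PC: "P \<subseteq> {1..c}" unfolding P_def using fvec_supp[OF lin_encode_fvec] by blast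
  have fP: "finite P" using PC finite_subset by blast
  have "2 * d - card P \<le> card ({1..c} - P)" using PC d cP fP by (simp add: card_Diff_subset P_def)
  then obtain G where G: "G \<subseteq> {1..c} - P" "card G = 2 * d - card P" "finite G"
    by (rule obtain_subset_with_card_n)
  define F where "F = P \<union> G"
  have F1: "F \<subseteq> {1..c}" using PC G by (auto simp: F_def)
  have "card F = card P + card G" unfolding F_def using G fP by (intro card_Un_disjoint) auto
  then have F2: "card F = 2 * d" using G cP by (simp add: P_def)
  have PF: "P \<subseteq> F" by (simp add: F_def)
  define T where "T = {1..m + c} - (({1..m} - Hi) \<union> (\<lambda>k. m + k) ` F)"
  define S where "S = {m + c + 1..m + 2*c}"
  have ce: "contr_rank (pm_rank D) T ({fi} \<union> S) = contr_rank (pm_rank D) T S"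
    using cond F1 F2 unfolding T_def S_def Let_def by blast
  have Ts: "T \<subseteq> {1..m + 2*c}" by (auto simp: T_def)
  have Ss: "S \<subseteq> {1..m + 2*c}" by (auto simp: S_def)
  have fis: "{fi} \<subseteq> {1..m + 2*c}" using fi by auto
  have s1: "({fi} \<union> S) \<union> T \<subseteq> {1..m + 2*c}" using Ts Ss fis by blast
  have s2: "S \<union> T \<subseteq> {1..m + 2*c}" using Ts Ss by blast
  have m1: "rr T \<le> rr (({fi} \<union> S) \<union> T)" by (rule rr_mono[OF _ s1]) blast
  have m2: "rr T \<le> rr (S \<union> T)" by (rule rr_mono[OF _ s2]) blast
  have "rr (({fi} \<union> S) \<union> T) = rr (S \<union> T)"
    using ce m1 m2 rr_pm[OF s1] rr_pm[OF s2] rr_pm[OF Ts] unfolding contr_rank_def by simp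
  then have dimeq: "fs.dim (UV (S \<union> T)) = fs.dim (UV (({fi} \<union> S) \<union> T))" by (simp add: rr_def)
  have YX: "UV (({fi} \<union> S) \<union> T) \<subseteq> fs.span (UV (S \<union> T))"
    by (rule dim_eq_sub_span[OF fin_UV[OF s1] UV_mono dimeq]) blast
  define val where "val v = (let r = inv_into Idx vec v in
      if r \<le> m*n then z (bi n r) (po n r) else - ?C z (r - m*n))" for v
  obtain \<phi> where \<phi>: "Vector_Spaces.linear fscale ((*) :: 'a \<Rightarrow> _) \<phi>" "\<forall>v\<in>Vall. \<phi> v = val v"
    using fsp.linear_independent_extend[OF indep_Vall, of val] by blast
  have \<phi>w: "\<phi> (w r) = z (bi n r) (po n r)" if r: "r \<in> {1..m*n}" for r
  proof -
    have ri: "r \<in> Idx" using r by auto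
    have "\<phi> (vec r) = val (vec r)" using \<phi>(2) ri by blast
    then have "\<phi> (w r) = val (vec r)" unfolding vec_w[OF r] .
    also have "\<dots> = z (bi n r) (po n r)" using inv_into_f_f[OF inj_vec ri] r by (simp add: val_def)
    finally show ?thesis .
  qed
  have \<phi>b: "\<phi> (bv k) = - ?C z k" if k: "k \<in> {1..c}" for k
  proof -
    have ri: "m*n + k \<in> Idx" using k by auto
    have "\<phi> (vec (m*n+k)) = val (vec (m*n+k))" using \<phi>(2) ri by blast
    then have "\<phi> (bv k) = val (vec (m*n+k))" unfolding vec_b[OF k] .
    also have "\<dots> = - ?C z k" using inv_into_f_f[OF inj_vec ri] k by (simp add: val_def)
    finally show ?thesis .
  qed
  have \<phi>g: "\<phi> (gw k) = 0" if k: "k \<in> {1..c}" for k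
  proof -
    let ?\<beta> = "fst (BA k)" and ?\<alpha> = "snd (BA k)"
    have bnz: "?\<beta> \<noteq> 0" using BA_prop[OF k] by blast
    have "\<phi> (gw k) = \<phi> (fscale ?\<beta> (bv k) + (\<Sum>r\<in>{1..m*n}. fscale (?\<alpha> r) (w r)))"
      using BA_prop[OF k] by metis
    also have "\<dots> = ?\<beta> * \<phi> (bv k) + (\<Sum>r\<in>{1..m*n}. ?\<alpha> r * \<phi> (w r))"
      by (simp add: lin_facts[OF \<phi>(1)])
    also have "\<dots> = - (?\<beta> * ?C z k) + (\<Sum>r\<in>{1..m*n}. ?\<alpha> r * z (bi n r) (po n r))"
      using \<phi>b[OF k] \<phi>w by simp
    also have "?\<beta> * ?C z k = (\<Sum>r\<in>{1..m*n}. ?\<alpha> r * z (bi n r) (po n r))"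
    proof -
      have "?C z k = (\<Sum>r\<in>{1..m*n}. z (bi n r) (po n r) * LL r k)"
        using k by (simp add: lin_encode_def bi_def po_def)
      then have "?\<beta> * ?C z k = (\<Sum>r\<in>{1..m*n}. ?\<beta> * (z (bi n r) (po n r) * LL r k))"
        by (simp add: sum_distrib_left)
      also have "\<dots> = (\<Sum>r\<in>{1..m*n}. ?\<alpha> r * z (bi n r) (po n r))"
        using bnz by (intro sum.cong) (simp_all add: LL_def)
      finally show ?thesis .
    qed
    finally show ?thesis by simp
  qed
  have \<phi>X: "\<phi> v = 0" if v: "v \<in> UV (S \<union> T)" for v
  proof -
    obtain j where j: "j \<in> S \<union> T" "v \<in> V j" using v unfolding UV_def by blast
    show ?thesis
    proof (cases "j \<in> S")
      case True
      then have k: "j - m - c \<in> {1..c}" and e: "j = m + c + (j - m - c)" by (auto simp: S_def)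
      have "v \<in> fs.span {gw (j - m - c)}" using gw_prop[OF k] j(2) e by (metis subsetD)
      then show ?thesis using linear_zero_span[OF \<phi>(1)] \<phi>g[OF k] by blast
    next
      case False
      then have jT: "j \<in> T" using j by blast
      show ?thesis
      proof (cases "j \<le> m")
        case True
        then have jm: "j \<in> {1..m}" and jH: "j \<in> Hi" using jT by (auto simp: T_def)
        have "\<forall>x\<in>W j ` {1..n}. \<phi> x = 0"
        proof
          fix x assume "x \<in> W j ` {1..n}"
          then obtain s where s: "s \<in> {1..n}" "x = W j s" by blast
          have r: "(j-1)*n+s \<in> {1..m*n}" by (rule blk_range[OF jm s(1)])
          have "\<phi> x = z (bi n ((j-1)*n+s)) (po n ((j-1)*n+s))" using \<phi>w[OF r] w_blk[OF jm s(1)] s by simp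
          also have "\<dots> = z j s" using blk_a[of j s n] jm s(1) by simp
          finally show "\<phi> x = 0" using zH jH by simp
        qed
        moreover have "v \<in> fs.span (W j ` {1..n})" using W_prop[OF jm] j(2) by blast
        ultimately show ?thesis using linear_zero_span[OF \<phi>(1)] by blast
      next
        case False
        then have k: "j - m \<in> {1..c}" and e: "j = m + (j - m)" using jT by (auto simp: T_def)
        have "j - m \<notin> F"
        proof
          assume "j - m \<in> F"
          then have "j \<in> (\<lambda>k. m + k) ` F" using e by (metis image_eqI)
          then show False using jT by (simp add: T_def)
        qed
        then have "j - m \<notin> P" using PF by blast
        then have "?C z (j - m) = 0" by (simp add: P_def)
        then have b0: "\<phi> (bv (j - m)) = 0" using \<phi>b[OF k] by simp
        have "v \<in> fs.span {bv (j - m)}" using bv_prop[OF k] j(2) e by (metis subsetD)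
        then show ?thesis using linear_zero_span[OF \<phi>(1)] b0 by blast
      qed
    qed
  qed
  show "z fi = (\<lambda>_. 0)"
  proof
    fix s
    show "z fi s = 0"
    proof (cases "s \<in> {1..n}")
      case True
      have "W fi s \<in> V fi" using W_prop[OF fi] True by blast
      then have "W fi s \<in> UV (({fi} \<union> S) \<union> T)" unfolding UV_def by blast
      then have "W fi s \<in> fs.span (UV (S \<union> T))" using YX by blast
      then have "\<phi> (W fi s) = 0" using linear_zero_span[OF \<phi>(1)] \<phi>X by blast
      moreover have r: "(fi-1)*n+s \<in> {1..m*n}" by (rule blk_range[OF fi True])
      have "\<phi> (W fi s) = z fi s" using \<phi>w[OF r] w_blk[OF fi True] blk_a[of fi s n] fi True by simp
      ultimately show ?thesis by simp
    next
      case False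
      then show ?thesis using zm fi by (auto simp: msgs_def fvec_def)
    qed
  qed
qed

end

lemma backward:
  assumes hf: "\<forall>i\<in>I. f i \<in> {1..m}" and hH: "\<forall>i\<in>I. H i \<subseteq> {1..m} - {f i}"
    and hd: "\<forall>i\<in>I. 2 * \<delta> i \<le> c"
    and R: "RHS m n c I f H \<delta> TYPE('a::{field,finite})"
  shows "is_vl_diff_ecic m n c I f H \<delta> TYPE('a)"
proof -
  obtain D where D: "pm_representable (m + 2*c) D TYPE('a)"
       "pm_rank D {1..m + c} = m*n + c"
       "\<forall>j\<in>{1..m}. pm_rank D {j} = n"
       "\<forall>j\<in>{1..2*c}. pm_rank D {m + j} = 1"
       "\<forall>j\<in>{1..c}.
          pm_rank D ({1..m} \<union> {m + j, m + c + j}) = pm_rank D ({1..m} \<union> {m + j}) \<and>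
          pm_rank D ({1..m} \<union> {m + j}) = pm_rank D ({1..m} \<union> {m + c + j})"
       "\<forall>i\<in>I. \<forall>F. F \<subseteq> {1..c} \<and> card F = 2 * \<delta> i \<longrightarrow>
          (let T = {1..m + c} - (({1..m} - H i) \<union> (\<lambda>k. m + k) ` F);
               S = {m + c + 1..m + 2*c}
           in contr_rank (pm_rank D) T ({f i} \<union> S) = contr_rank (pm_rank D) T S)"
    using R unfolding RHS_def by blast
  obtain K and V :: "nat \<Rightarrow> (nat \<Rightarrow> 'a) set" where KV:
    "\<forall>j\<in>{1..m + 2*c}. fs.subspace (V j) \<and> V j \<subseteq> {v. \<forall>t\<ge>K. v t = 0}"
    "\<forall>A\<subseteq>{1..m + 2*c}. fs.dim (fs.span (\<Union>j\<in>A. V j)) = pm_rank D A"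
    using D(1) unfolding pm_representable_def by blast
  interpret bwd m n c K V D
    by (unfold_locales) (use KV D(2-5) in auto)
  have "is_diff_ecic m n c I f H \<delta> (lin_encode m n c LL)"
    unfolding is_diff_ecic_def
  proof (intro conjI ballI)
    fix x show "lin_encode m n c LL x \<in> fvec c" by (rule lin_encode_fvec)
  next
    fix i assume i: "i \<in> I"
    show "\<exists>\<psi>. \<forall>x\<in>msgs m n. \<forall>e\<in>fvec c. hweight e \<le> \<delta> i \<longrightarrow>
         \<psi> (\<lambda>t. lin_encode m n c LL x t + e t) (side_info (H i) x) = x (f i)"
      by (rule decoder_of_good[OF good_i]) (use hf hH hd D(6) i in auto)
  qed
  then show ?thesis unfolding is_vl_diff_ecic_def by blast
qed


theorem theorem1:
  fixes m n c :: nat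
    and I :: "'r set" and f :: "'r \<Rightarrow> nat" and H :: "'r \<Rightarrow> nat set" and \<delta> :: "'r \<Rightarrow> nat"
  assumes "finite I"
    and "\<forall>i\<in>I. f i \<in> {1..m}"
    and "\<forall>i\<in>I. H i \<subseteq> {1..m} - {f i}"
    and "\<forall>i\<in>I. 2 * \<delta> i \<le> c"
  shows "is_vl_diff_ecic m n c I f H \<delta> TYPE('a::{field,finite}) \<longleftrightarrow>
    (\<exists>D. discrete_polymatroid (m + 2*c) D \<and> pm_representable (m + 2*c) D TYPE('a) \<and>
       pm_rank D {1..m + 2*c} = m*n + c \<and>
       (\<forall>j\<in>{1..m}. pm_rank D {j} = n) \<and>
       pm_rank D {1..m + c} = m*n + c \<and>
       (\<forall>j\<in>{1..2*c}. pm_rank D {m + j} = 1) \<and>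
       (\<forall>j\<in>{1..c}.
          pm_rank D ({1..m} \<union> {m + j, m + c + j}) = pm_rank D ({1..m} \<union> {m + j}) \<and>
          pm_rank D ({1..m} \<union> {m + j}) = pm_rank D ({1..m} \<union> {m + c + j})) \<and>
       (\<forall>i\<in>I. \<forall>F. F \<subseteq> {1..c} \<and> card F = 2 * \<delta> i \<longrightarrow>
          (let T = {1..m + c} - (({1..m} - H i) \<union> (\<lambda>k. m + k) ` F);
               S = {m + c + 1..m + 2*c}
           in contr_rank (pm_rank D) T ({f i} \<union> S) = contr_rank (pm_rank D) T S)))"
proof -
  have "is_vl_diff_ecic m n c I f H \<delta> TYPE('a) \<longleftrightarrow> RHS m n c I f H \<delta> TYPE('a)"
    using forward[OF assms(2,3)] backward[OF assms(2,3,4)] by blast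
  then show ?thesis unfolding RHS_def .
qed

end
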